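(* Let $\gamma$ be a nonnegative absolutely continuous random variable with probability density function $f_\gamma$, and define $\mathcal{Q}_\gamma(p)=\mathbb{E}[Q(\sqrt{p\gamma})]$. Then $\mathcal{Q}_\gamma(p)$ is defined for all $p\in[0,\infty)$, and: (i) $\mathcal{Q}_\gamma$ is continuous and decreasing on $[0,\infty)$, with $\mathcal{Q}_\gamma(0)=\tfrac12$ and $\lim_{p\to\infty}\mathcal{Q}_\gamma(p)=0$. (ii) If $\mathcal{Q}_\gamma(p)=\Phi(p)$ (with $\Phi$ understood on $\operatorname{Re}[p]>0$ via its analytic continuation), then for any $\varepsilon>0$, \[ f_\gamma(\gamma)=\frac{1}{j\sqrt{2\pi}}\frac{d}{d\gamma}\left\{\sqrt\gamma\int_{\varepsilon-j\infty}^{\varepsilon+j\infty}\frac{\Phi(p)}{\sqrt p}e^{\frac{p\gamma}{2}}\,dp\right\}. \]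
   Context: $Q(x)=\frac{1}{\sqrt{2\pi}}\int_x^\infty e^{-t^2/2}\,dt$ is the Gaussian $Q$-function; $\mathcal{Q}_\gamma$ is called the Gaussian $\mathcal{Q}$-transform of $\gamma$. $j$ denotes the imaginary unit and the integral is a Bromwich (inverse Laplace) contour integral along the vertical line $\operatorname{Re}[p]=\varepsilon$. *)

theory Defs
  imports "HOL-Probability.Probability" "HOL-Complex_Analysis.Complex_Analysis"
begin

definition gaussQ :: "real \<Rightarrow> real" where
  "gaussQ x = (1 / sqrt (2 * pi)) * (LBINT t:{x..}. exp (- (t\<^sup>2) / 2))"

definition gaussQ_transform :: "'a measure \<Rightarrow> ('a \<Rightarrow> real) \<Rightarrow> real \<Rightarrow> real" where
  "gaussQ_transform M X p = (\<integral>\<omega>. gaussQ (sqrt (p * X \<omega>)) \<partial>M)"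

text \<open>Integrand of the Bromwich integral along Re p = eps, parametrised by p = eps + j t,
  so that dp = j dt.\<close>
definition bromwich_integrand ::
  "(complex \<Rightarrow> complex) \<Rightarrow> real \<Rightarrow> real \<Rightarrow> real \<Rightarrow> complex" where
  "bromwich_integrand \<Phi> \<epsilon> x t =
     (let p = Complex \<epsilon> t in \<Phi> p / csqrt p * exp (p * complex_of_real x / 2) * \<i>)"

definition bromwich :: "(complex \<Rightarrow> complex) \<Rightarrow> real \<Rightarrow> real \<Rightarrow> complex" where
  "bromwich \<Phi> \<epsilon> x = Lim at_top (\<lambda>T. integral {-T..T} (bromwich_integrand \<Phi> \<epsilon> x))"

end

theory Submission
  imports Defs
begin

abbreviation "N \<equiv> std_normal_density"

lemma gaussQ_alt: "gaussQ x = (\<integral>t. indicator {x..} t * N t \<partial>lborel)"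
  unfolding gaussQ_def normal_density_def set_lebesgue_integral_def
  by (simp add: integral_mult_right_zero[symmetric] mult_ac)

lemma N_pos: "N t > 0" by (simp add: normal_density_def)
lemma N_le1: "N t \<le> 1"
proof -
  have "exp (- (t - 0)\<^sup>2 / (2 * 1\<^sup>2)) \<le> 1" by simp
  moreover have "1 / sqrt (2 * pi * 1\<^sup>2) \<le> 1" using pi_gt3 by (simp add: field_simps real_le_rsqrt)
  ultimately show ?thesis unfolding normal_density_def
    by (metis (no_types, lifting) exp_gt_zero mult_le_one order_less_imp_le zero_le_divide_1_iff real_sqrt_ge_zero)
qed

lemma int_ind_N: "integrable lborel (\<lambda>t. indicator A t * N t)" if "A \<in> sets borel"
  using that by (subst mult.commute, intro integrable_real_mult_indicator) auto

lemma int_Ico: "integrable lborel (indicator {x..<y::real} :: real \<Rightarrow> real)"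
  by (cases "x \<le> y") (auto simp: emeasure_lborel_Ico)

lemma int_Ico_c: "integrable lborel (\<lambda>t. indicator {x..<y::real} t * (c::real))"
  using int_Ico[of x y] by simp

lemma gaussQ_nonneg: "0 \<le> gaussQ x"
  unfolding gaussQ_alt by (intro integral_nonneg_AE) (auto simp: less_imp_le[OF N_pos])

lemma gaussQ_le1: "gaussQ x \<le> 1"
proof -
  have "gaussQ x \<le> (\<integral>t. N t \<partial>lborel)"
    unfolding gaussQ_alt
    by (intro integral_mono int_ind_N) (auto simp: indicator_def less_imp_le[OF N_pos])
  then show ?thesis by simp
qed

lemma gaussQ_diff: "x \<le> y \<Longrightarrow> gaussQ x - gaussQ y = (\<integral>t. indicator {x..<y} t * N t \<partial>lborel)"
proof -
  assume xy: "x \<le> y"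
  have "gaussQ x = (\<integral>t. indicator {x..<y} t * N t + indicator {y..} t * N t \<partial>lborel)"
    unfolding gaussQ_alt using xy by (intro Bochner_Integration.integral_cong) (auto simp: indicator_def)
  also have "\<dots> = (\<integral>t. indicator {x..<y} t * N t \<partial>lborel) + gaussQ y"
    unfolding gaussQ_alt by (intro Bochner_Integration.integral_add int_ind_N) auto
  finally show ?thesis by simp
qed

lemma gaussQ_lip: "x \<le> y \<Longrightarrow> gaussQ x - gaussQ y \<le> y - x"
proof -
  assume xy: "x \<le> y"
  have "(\<integral>t. indicator {x..<y} t * N t \<partial>lborel) \<le> (\<integral>t. indicator {x..<y} t \<partial>lborel)"
    by (intro integral_mono int_ind_N int_Ico) (auto simp: indicator_def N_le1)
  also have "\<dots> = y - x" using xy by simp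
  finally show ?thesis using gaussQ_diff[OF xy] by simp
qed

lemma gaussQ_mono: "x \<le> y \<Longrightarrow> gaussQ y \<le> gaussQ x"
proof -
  assume "x \<le> y"
  moreover have "0 \<le> (\<integral>t. indicator {x..<y} t * N t \<partial>lborel)"
    by (intro integral_nonneg_AE) (auto simp: less_imp_le[OF N_pos])
  ultimately show ?thesis using gaussQ_diff[of x y] by linarith
qed

lemma gaussQ_strict: "x < y \<Longrightarrow> gaussQ y < gaussQ x"
proof -
  assume xy: "x < y"
  define m where "m = min (N x) (N y)"
  have m: "m > 0" using N_pos by (simp add: m_def)
  have Nge: "N t \<ge> m" if "x \<le> t" "t \<le> y" for t
  proof -
    have "t\<^sup>2 \<le> max (x\<^sup>2) (y\<^sup>2)"
      using that by (smt (verit) power2_le_iff_abs_le abs_le_iff power2_abs)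
    then have "N t \<ge> N x \<or> N t \<ge> N y"
      by (auto simp: normal_density_def max_def divide_right_mono split: if_splits)
    then show ?thesis by (auto simp: m_def)
  qed
  have "(\<integral>t. indicator {x..<y} t * m \<partial>lborel) \<le> (\<integral>t. indicator {x..<y} t * N t \<partial>lborel)"
    by (intro integral_mono int_ind_N int_Ico_c) (auto simp: indicator_def Nge)
  moreover have "(\<integral>t. indicator {x..<y} t * m \<partial>lborel) = (y - x) * m" using xy by simp
  ultimately show ?thesis using gaussQ_diff[of x y] xy m by (smt (verit) mult_pos_pos)
qed

lemma gaussQ_cont: "continuous_on UNIV gaussQ"
  unfolding continuous_on_iff
proof (intro ballI allI impI)
  fix x e :: real assume e: "0 < e"
  show "\<exists>d>0. \<forall>x'\<in>UNIV. dist x' x < d \<longrightarrow> dist (gaussQ x') (gaussQ x) < e"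
  proof (intro exI[of _ e] conjI ballI impI e)
    fix x' assume "dist x' x < e"
    then show "dist (gaussQ x') (gaussQ x) < e"
      using gaussQ_lip[of x x'] gaussQ_lip[of x' x] gaussQ_mono[of x x'] gaussQ_mono[of x' x]
      by (cases "x \<le> x'") (auto simp: dist_real_def)
  qed
qed

lemma isCont_gaussQ: "isCont gaussQ x"
  using gaussQ_cont by (simp add: continuous_on_eq_continuous_at)

lemma gaussQ_measurable[measurable]: "gaussQ \<in> borel_measurable borel"
  using gaussQ_cont by (intro borel_measurable_continuous_onI) 

lemma gaussQ_zero: "gaussQ 0 = 1/2"
proof -
  have A: "(\<integral>t. indicator {..<0} t * N t \<partial>lborel) = (\<integral>t. indicator {0<..} t * N t \<partial>lborel)"
  proof -
    have "(\<integral>t. indicator {..<0} t * N t \<partial>lborel) = \<bar>-1\<bar> *\<^sub>R (\<integral>t. indicator {..<0} (0 + -1 * t) * N (0 + -1 * t) \<partial>lborel)"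
      by (rule lborel_integral_real_affine) simp
    also have "\<dots> = (\<integral>t. indicator {0<..} t * N t \<partial>lborel)"
      by (simp add: indicator_def normal_density_def)
    finally show ?thesis .
  qed
  have B: "(\<integral>t. indicator {0<..} t * N t \<partial>lborel) = gaussQ 0"
    unfolding gaussQ_alt
  proof (rule integral_cong_AE)
    show "AE t in lborel. indicator {0<..} t * N t = indicator {0..} t * N t"
      using AE_lborel_singleton[of 0] by eventually_elim (auto simp: indicator_def)
  qed auto
  have "1 = (\<integral>t. N t \<partial>lborel)" by simp
  also have "\<dots> = (\<integral>t. indicator {..<0} t * N t + indicator {0..} t * N t \<partial>lborel)"
    by (intro Bochner_Integration.integral_cong) (auto simp: indicator_def)
  also have "\<dots> = (\<integral>t. indicator {..<0} t * N t \<partial>lborel) + gaussQ 0"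
    unfolding gaussQ_alt by (intro Bochner_Integration.integral_add int_ind_N) auto
  finally show ?thesis using A B by simp
qed

lemma gaussQ_bound: "x > 0 \<Longrightarrow> gaussQ x \<le> (\<integral>t. N t * \<bar>t\<bar> ^ 1 \<partial>lborel) / x"
proof -
  assume x: "x > 0"
  have "gaussQ x \<le> (\<integral>t. (N t * \<bar>t\<bar> ^ 1) / x \<partial>lborel)"
    unfolding gaussQ_alt
  proof (intro integral_mono int_ind_N)
    show "integrable lborel (\<lambda>t. N t * \<bar>t\<bar> ^ 1 / x)"
      using integrable_std_normal_moment_abs[of 1] by simp
    fix t show "indicator {x..} t * N t \<le> N t * \<bar>t\<bar> ^ 1 / x"
      using x N_pos[of t] by (auto simp: indicator_def field_simps)
  qed auto
  then show ?thesis by simp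
qed

lemma gaussQ_at_top: "(gaussQ \<longlongrightarrow> 0) at_top"
proof -
  define C where "C = (\<integral>t. N t * \<bar>t\<bar> ^ 1 \<partial>lborel)"
  have "((\<lambda>x. C / x) \<longlongrightarrow> 0) at_top"
    by (intro tendsto_divide_0[OF tendsto_const] filterlim_at_top_imp_at_infinity[OF filterlim_ident])
  moreover have "\<forall>\<^sub>F x in at_top. 0 \<le> gaussQ x" by (simp add: gaussQ_nonneg)
  moreover have "\<forall>\<^sub>F x in at_top. gaussQ x \<le> C / x"
      using eventually_gt_at_top[of 0] by eventually_elim (metis gaussQ_bound C_def)
  ultimately show ?thesis by (intro tendsto_sandwich[of "\<lambda>_. 0" gaussQ _ "\<lambda>x. C / x"]) auto
qed


locale setting = prob_space M for M :: "'a measure" +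
  fixes X :: "'a \<Rightarrow> real" and f :: "real \<Rightarrow> real"
  assumes nn: "\<forall>\<omega>\<in>space M. X \<omega> \<ge> 0"
    and fm: "f \<in> borel_measurable borel"
    and fnn: "\<forall>x. f x \<ge> 0"
    and D: "distributed M lborel X (\<lambda>x. ennreal (f x))"
begin

lemma fm'[measurable]: "f \<in> borel_measurable borel" by (rule fm)

lemma Xm[measurable]: "X \<in> borel_measurable M"
  using distributed_measurable[OF D] by simp

lemma atom: "emeasure M {\<omega>\<in>space M. X \<omega> = c} = 0"
proof -
  have "emeasure M (X -` {c} \<inter> space M) = (\<integral>\<^sup>+x. ennreal (f x) * indicator {c} x \<partial>lborel)"
    by (rule distributed_emeasure[OF D]) simp
  also have "\<dots> = 0"
    using AE_lborel_singleton[of c] by (subst nn_integral_0_iff_AE) (auto simp: indicator_def)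
  finally show ?thesis by (simp add: vimage_def Int_def conj_commute)
qed

lemma AE_neq: "AE \<omega> in M. X \<omega> \<noteq> c"
  using atom[of c] by (intro AE_I[where N="{\<omega>\<in>space M. X \<omega> = c}"]) auto

lemma AE_pos: "AE \<omega> in M. X \<omega> > 0"
  using AE_neq[of 0] AE_space by eventually_elim (use nn in auto)

lemma meas_Q[measurable]: "(\<lambda>\<omega>. gaussQ (sqrt (p * X \<omega>))) \<in> borel_measurable M"
  by measurable

lemma int_Q: "integrable M (\<lambda>\<omega>. gaussQ (sqrt (p * X \<omega>)))"
  by (rule integrable_const_bound[where B=1]) (auto simp: gaussQ_nonneg gaussQ_le1)

lemma Qt_cont: "continuous_on {0..} (gaussQ_transform M X)"
proof (rule continuous_on_sequentiallyI)
  fix u :: "nat \<Rightarrow> real" and a assume u: "u \<longlonglongrightarrow> a"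
  show "(\<lambda>n. gaussQ_transform M X (u n)) \<longlonglongrightarrow> gaussQ_transform M X a"
    unfolding gaussQ_transform_def
  proof (rule integral_dominated_convergence[where w="\<lambda>_. 1"])
    show "AE \<omega> in M. (\<lambda>n. gaussQ (sqrt (u n * X \<omega>))) \<longlonglongrightarrow> gaussQ (sqrt (a * X \<omega>))"
      using u by (intro AE_I2 isCont_tendsto_compose[OF isCont_gaussQ] tendsto_intros) 
    show "\<And>n. AE \<omega> in M. norm (gaussQ (sqrt (u n * X \<omega>))) \<le> 1"
      by (auto simp: gaussQ_nonneg gaussQ_le1)
  qed auto
qed

lemma Qt_strict: "0 \<le> p \<Longrightarrow> p < q \<Longrightarrow> gaussQ_transform M X q < gaussQ_transform M X p"
  unfolding gaussQ_transform_def
proof (rule integral_less_AE_space[OF int_Q int_Q])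
  assume pq: "0 \<le> p" "p < q"
  show "AE \<omega> in M. gaussQ (sqrt (q * X \<omega>)) < gaussQ (sqrt (p * X \<omega>))"
    using AE_pos by eventually_elim (use pq in \<open>auto intro!: gaussQ_strict\<close>)
qed (simp add: emeasure_space_1)

lemma Qt_zero: "gaussQ_transform M X 0 = 1/2"
  unfolding gaussQ_transform_def by (simp add: gaussQ_zero prob_space)

lemma Qt_top: "(gaussQ_transform M X \<longlongrightarrow> 0) at_top"
  unfolding gaussQ_transform_def
proof -
  have "((\<lambda>p. \<integral>\<omega>. gaussQ (sqrt (p * X \<omega>)) \<partial>M) \<longlongrightarrow> (\<integral>\<omega>. 0 \<partial>M)) at_top"
  proof (rule integral_dominated_convergence_at_top[where w="\<lambda>_. 1"])
    show "AE \<omega> in M. ((\<lambda>p. gaussQ (sqrt (p * X \<omega>))) \<longlongrightarrow> 0) at_top"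
      using AE_pos
    proof eventually_elim
      case (elim \<omega>)
      have "filterlim (\<lambda>p. sqrt (p * X \<omega>)) at_top at_top"
        using elim
        by (intro filterlim_compose[OF sqrt_at_top] filterlim_at_top_mult_tendsto_pos[OF tendsto_const] filterlim_ident)
      then show ?case by (rule filterlim_compose[OF gaussQ_at_top])
    qed
    show "\<forall>\<^sub>F i in at_top. AE \<omega> in M. norm (gaussQ (sqrt (i * X \<omega>))) \<le> 1"
      by (auto simp: gaussQ_nonneg gaussQ_le1)
  qed auto
  then show "((\<lambda>p. \<integral>\<omega>. gaussQ (sqrt (p * X \<omega>)) \<partial>M) \<longlongrightarrow> 0) at_top" by simp
qed

end

lemma int_gauss_mom: "c > 0 \<Longrightarrow> integrable lborel (\<lambda>u::real. u ^ k * exp (- c * u\<^sup>2))"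
proof -
  assume c: "c > 0"
  define s where "s = sqrt (2 * c)"
  have s: "s > 0" using c by (simp add: s_def)
  have "integrable lborel (\<lambda>u. N (0 + s * u) * (0 + s * u) ^ k)"
    using s by (intro lborel_integrable_real_affine integrable_std_normal_moment) simp
  then have "integrable lborel (\<lambda>u. (sqrt (2 * pi) / s ^ k) * (N (0 + s * u) * (0 + s * u) ^ k))"
    by simp
  moreover have "(sqrt (2 * pi) / s ^ k) * (N (0 + s * u) * (0 + s * u) ^ k) = u ^ k * exp (- c * u\<^sup>2)" for u
    using s c by (simp add: normal_density_def s_def power_mult_distrib field_simps)
  ultimately show ?thesis by simp
qed

lemma int_gauss: "c > 0 \<Longrightarrow> integrable lborel (\<lambda>u::real. exp (- c * u\<^sup>2))"
  using int_gauss_mom[of c 0] by simp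

lemma abs_sinc_le: "\<bar>sinc y\<bar> \<le> 1"
  using abs_sin_x_le_abs_x[of y] by (auto simp: abs_divide divide_le_eq_1)

lemma abs_sinc_le2: "y \<noteq> 0 \<Longrightarrow> \<bar>sinc y\<bar> \<le> 1 / \<bar>y\<bar>"
  using abs_sin_le_one[of y] by (auto simp: abs_divide divide_right_mono)

lemma FTC_inf:
  fixes F f :: "real \<Rightarrow> real"
  assumes der: "\<And>u. u > c \<Longrightarrow> (F has_real_derivative f u) (at u)"
    and cont: "\<And>u. u > c \<Longrightarrow> isCont f u"
    and int: "integrable lborel (\<lambda>u. indicator {c..} u * f u)"
    and A: "(F \<longlongrightarrow> A) (at_right c)"
    and B: "(F \<longlongrightarrow> 0) at_top"
  shows "(\<integral>u. indicator {c..} u * f u \<partial>lborel) = - A"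
proof -
  have si: "set_integrable lborel {c..} f" using int by (simp add: set_integrable_def)
  then have si2: "set_integrable lborel (einterval (ereal c) \<infinity>) f"
    by (rule set_integrable_subset) auto
  have "(LBINT u=ereal c..\<infinity>. f u) = 0 - A"
  proof (rule interval_integral_FTC_integrable[OF _ _ _ si2])
    show "((F \<circ> real_of_ereal) \<longlongrightarrow> A) (at_right (ereal c))" using A by (simp add: ereal_tendsto_simps)
    show "((F \<circ> real_of_ereal) \<longlongrightarrow> 0) (at_left \<infinity>)" using B by (simp add: ereal_tendsto_simps)
  qed (auto intro: der cont simp: has_real_derivative_iff_has_vector_derivative[symmetric])
  also have "(LBINT u=ereal c..\<infinity>. f u) = (\<integral>u. indicator {c<..} u * f u \<partial>lborel)"
    by (simp add: interval_integral_to_infinity_eq set_lebesgue_integral_def)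
  also have "\<dots> = (\<integral>u. indicator {c..} u * f u \<partial>lborel)"
  proof -
    have m: "(\<lambda>u. indicator {c..} u * f u) \<in> borel_measurable borel"
      using borel_measurable_integrable[OF int] by simp
    have "(\<lambda>u. indicator {c<..} u * (indicator {c..} u * f u)) \<in> borel_measurable borel"
      using m by measurable
    moreover have "(\<lambda>u. indicator {c<..} u * (indicator {c..} u * f u)) = (\<lambda>u. indicator {c<..} u * f u)"
      by (auto simp: indicator_def)
    ultimately have m2: "(\<lambda>u. indicator {c<..} u * f u) \<in> borel_measurable borel" by simp
    show ?thesis
      using AE_lborel_singleton[of c] m m2 by (intro integral_cong_AE) (auto simp: indicator_def elim!: eventually_mono)
  qed
  finally show ?thesis by simp
qed

definition BS :: real where "BS = (SOME B. \<forall>T. \<bar>Si T\<bar> \<le> B)"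
lemma Si_bound: "\<bar>Si t\<bar> \<le> BS"
  using someI_ex[OF bounded_Si] unfolding BS_def by blast
lemma BS_nonneg: "BS \<ge> 0" using Si_bound[of 0] by simp

lemma Si_zero: "Si 0 = 0" by (simp add: Si_def zero_ereal_def)

lemma Si_lim: "((\<lambda>T. Si (T * y)) \<longlongrightarrow> pi / 2 * sgn y) at_top"
proof -
  consider "y > 0" | "y = 0" | "y < 0" by linarith
  then show ?thesis
  proof cases
    case 1
    have "filterlim (\<lambda>T. T * y) at_top at_top"
      using 1 by (intro filterlim_at_top_mult_tendsto_pos[OF tendsto_const] filterlim_ident)
    from filterlim_compose[OF Si_at_top this] show ?thesis using 1 by simp
  next
    case 2 then show ?thesis by (simp add: Si_zero)
  next
    case 3
    have "filterlim (\<lambda>T. T * (-y)) at_top at_top"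
      using 3 by (intro filterlim_at_top_mult_tendsto_pos[OF tendsto_const] filterlim_ident) auto
    from tendsto_minus[OF filterlim_compose[OF Si_at_top this]]
    have "((\<lambda>T. - Si (T * (-y))) \<longlongrightarrow> pi / 2 * sgn y) at_top" using 3 by simp
    then show ?thesis
    proof (rule Lim_transform_eventually)
      show "\<forall>\<^sub>F T in at_top. - Si (T * (-y)) = Si (T * y)"
        using eventually_ge_at_top[of 0]
      proof eventually_elim
        case (elim T)
        have "Si (- (T * (-y))) = - Si (T * (-y))" using elim 3 by (intro Si_neg mult_nonneg_nonneg) auto
        then show ?case by simp
      qed
    qed
  qed
qed

locale kern =
  fixes x \<epsilon> :: real
  assumes x: "x > 0" and e: "\<epsilon> > 0"
begin

definition w :: "real \<Rightarrow> real" where "w u = (u\<^sup>2 - x) / 2"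
definition psi :: "real \<Rightarrow> real" where "psi u = exp (- \<epsilon> * w u)"
definition jT :: "real \<Rightarrow> real \<Rightarrow> real" where "jT T u = psi u * (2 * T * sinc (T * w u))"
definition J :: "real \<Rightarrow> real \<Rightarrow> real" where "J T a = (\<integral>u. indicator {sqrt a..} u * jT T u \<partial>lborel)"
definition phi :: "real \<Rightarrow> real" where "phi u = 2 * psi u / u"
definition phi' :: "real \<Rightarrow> real" where "phi' u = - 2 * psi u * (\<epsilon> + 1 / u\<^sup>2)"
definition ST :: "real \<Rightarrow> real \<Rightarrow> real" where "ST T u = Si (T * w u)"
definition u1 :: real where "u1 = sqrt (x / 2)"
definition E0 :: real where "E0 = exp (\<epsilon> * x / 2)"

lemma psi_alt: "psi u = E0 * exp (- (\<epsilon> / 2) * u\<^sup>2)"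
proof -
  have "- \<epsilon> * w u = \<epsilon> * x / 2 + (- (\<epsilon> / 2) * u\<^sup>2)" unfolding w_def by (simp add: field_simps)
  then show ?thesis unfolding psi_def E0_def by (simp only: exp_add)
qed

lemma psi_pos: "psi u > 0" by (simp add: psi_def)

lemma psi_le: "psi u \<le> E0"
proof -
  have "exp (- (\<epsilon> / 2) * u\<^sup>2) \<le> 1" using e by simp
  then show ?thesis unfolding psi_alt by (intro mult_left_le) (auto simp: E0_def)
qed

lemma int_psi: "integrable lborel psi"
  unfolding psi_alt using int_gauss[of "\<epsilon>/2"] e by simp

lemma psi_meas[measurable]: "psi \<in> borel_measurable borel"
  unfolding psi_def w_def by measurable

lemma jT_meas[measurable]: "jT T \<in> borel_measurable borel"
  unfolding jT_def w_def by measurable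

lemma jT_bound: "T \<ge> 0 \<Longrightarrow> \<bar>jT T u\<bar> \<le> 2 * T * psi u"
proof -
  assume T: "T \<ge> 0"
  have "\<bar>jT T u\<bar> = psi u * (2 * T) * \<bar>sinc (T * w u)\<bar>"
    unfolding jT_def using psi_pos[of u] T by (simp add: abs_mult)
  also have "\<dots> \<le> psi u * (2 * T) * 1"
    using abs_sinc_le[of "T * w u"] psi_pos[of u] T by (intro mult_left_mono) auto
  finally show ?thesis by (simp add: mult.commute)
qed

lemma int_jT: "T \<ge> 0 \<Longrightarrow> integrable lborel (\<lambda>u. indicator A u * jT T u)" if "A \<in> sets borel"
proof -
  assume T: "T \<ge> 0"
  show ?thesis
  proof (rule Bochner_Integration.integrable_bound[where f="\<lambda>u. 2 * T * psi u"])
    show "integrable lborel (\<lambda>u. 2 * T * psi u)" using int_psi by simp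
    show "AE u in lborel. norm (indicator A u * jT T u) \<le> norm (2 * T * psi u)"
    proof (intro AE_I2)
      fix u show "norm (indicator A u * jT T u) \<le> norm (2 * T * psi u)"
        using jT_bound[OF T, of u] psi_pos[of u] T by (cases "u \<in> A") (auto simp: abs_mult)
    qed
  qed (use that in simp)
qed

lemma u1_pos: "u1 > 0" using x by (simp add: u1_def)
lemma w_u1: "u \<le> u1 \<Longrightarrow> u \<ge> 0 \<Longrightarrow> w u \<le> - x / 4"
proof -
  assume a: "u \<le> u1" "u \<ge> 0"
  have "u\<^sup>2 \<le> u1\<^sup>2" using a by (intro power_mono) auto
  also have "u1\<^sup>2 = x / 2" using x by (simp add: u1_def)
  finally show ?thesis by (simp add: w_def)
qed

lemma w_deriv: "(w has_real_derivative u) (at u)"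
  unfolding w_def by (auto intro!: derivative_eq_intros)
lemma psi_deriv: "(psi has_real_derivative (- \<epsilon> * u * psi u)) (at u)"
  unfolding psi_def w_def by (auto intro!: derivative_eq_intros simp: field_simps)
lemma phi_deriv: "u > 0 \<Longrightarrow> (phi has_real_derivative phi' u) (at u)"
proof -
  assume u: "u > 0"
  have "((\<lambda>u. 2 * psi u / u) has_real_derivative ((2 * (- \<epsilon> * u * psi u)) * u - 2 * psi u * 1) / (u * u)) (at u)"
    using u by (intro DERIV_divide DERIV_cmult psi_deriv DERIV_ident) simp
  moreover have "((2 * (- \<epsilon> * u * psi u)) * u - 2 * psi u * 1) / (u * u) = phi' u"
    using u by (simp add: phi'_def field_simps power2_eq_square)
  ultimately show ?thesis unfolding phi_def by simp
qed
lemma ST_deriv: "(ST T has_real_derivative (sinc (T * w u) * (T * u))) (at u)"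
  unfolding ST_def by (rule DERIV_chain2[OF DERIV_Si]) (auto intro!: derivative_eq_intros w_deriv)

lemma isCont_psi: "isCont psi u" using psi_deriv DERIV_isCont by blast
lemma isCont_w: "isCont w u" using w_deriv DERIV_isCont by blast
lemma isCont_ST: "isCont (ST T) u" using ST_deriv DERIV_isCont by blast
lemma isCont_phi': "u > 0 \<Longrightarrow> isCont phi' u"
  unfolding phi'_def by (intro continuous_intros isCont_psi) auto
lemma isCont_phi: "u > 0 \<Longrightarrow> isCont phi u"
  using phi_deriv DERIV_isCont by blast

lemma phi_pos: "u > 0 \<Longrightarrow> phi u > 0" using psi_pos by (simp add: phi_def)
lemma phi_le: "u > 0 \<Longrightarrow> phi u \<le> 2 * E0 / u"
  using psi_le[of u] by (simp add: phi_def divide_right_mono)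
lemma phi'_bound: "0 < c \<Longrightarrow> c \<le> u \<Longrightarrow> \<bar>phi' u\<bar> \<le> 2 * (\<epsilon> + 1 / c\<^sup>2) * psi u"
proof -
  assume c: "0 < c" "c \<le> u"
  have "1 / u\<^sup>2 \<le> 1 / c\<^sup>2" using c by (intro divide_left_mono power_mono) auto
  then have "\<bar>phi' u\<bar> = 2 * (\<epsilon> + 1 / u\<^sup>2) * psi u"
    using psi_pos[of u] e by (simp add: phi'_def abs_mult)
  also have "\<dots> \<le> 2 * (\<epsilon> + 1 / c\<^sup>2) * psi u"
    using psi_pos[of u] \<open>1 / u\<^sup>2 \<le> 1 / c\<^sup>2\<close> by (intro mult_right_mono) auto
  finally show ?thesis .
qed

lemma phi'_meas[measurable]: "phi' \<in> borel_measurable borel"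
  unfolding phi'_def by measurable
lemma ST_meas[measurable]: "ST T \<in> borel_measurable borel"
  unfolding ST_def w_def by measurable

lemma int_phi'_ST: "0 < c \<Longrightarrow> integrable lborel (\<lambda>u. indicator {c..} u * (phi' u * g u))"
  if "g \<in> borel_measurable borel" "\<And>u. \<bar>g u\<bar> \<le> Bd"
proof -
  assume c: "0 < c"
  show ?thesis
  proof (rule Bochner_Integration.integrable_bound[where f="\<lambda>u. Bd * (2 * (\<epsilon> + 1 / c\<^sup>2) * psi u)"])
    show "integrable lborel (\<lambda>u. Bd * (2 * (\<epsilon> + 1 / c\<^sup>2) * psi u))" using int_psi by simp
    show "AE u in lborel. norm (indicator {c..} u * (phi' u * g u)) \<le> norm (Bd * (2 * (\<epsilon> + 1 / c\<^sup>2) * psi u))"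
    proof (intro AE_I2)
      fix u
      show "norm (indicator {c..} u * (phi' u * g u)) \<le> norm (Bd * (2 * (\<epsilon> + 1 / c\<^sup>2) * psi u))"
      proof (cases "c \<le> u")
        case True
        have "\<bar>phi' u * g u\<bar> \<le> (2 * (\<epsilon> + 1 / c\<^sup>2) * psi u) * Bd"
          unfolding abs_mult using phi'_bound[OF c True] that(2)[of u]
          by (intro mult_mono) auto
        then show ?thesis using True psi_pos[of u] e that(2)[of 0] by (simp add: abs_mult mult_ac)
      qed (simp add: abs_mult)
    qed
  qed (use that in simp)
qed

lemma phi_top: "(phi \<longlongrightarrow> 0) at_top"
proof (rule Lim_null_comparison)
  show "\<forall>\<^sub>F u in at_top. norm (phi u) \<le> 2 * E0 / u"
    using eventually_gt_at_top[of 0] by eventually_elim (use phi_pos phi_le in force)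
  show "((\<lambda>u. 2 * E0 / u) \<longlongrightarrow> 0) at_top"
    by (intro tendsto_divide_0[OF tendsto_const] filterlim_at_top_imp_at_infinity[OF filterlim_ident])
qed

lemma FTC_phi': "c > 0 \<Longrightarrow> (\<integral>u. indicator {c..} u * phi' u \<partial>lborel) = - phi c"
proof (rule FTC_inf[where F=phi])
  assume c: "c > 0"
  show "integrable lborel (\<lambda>u. indicator {c..} u * phi' u)"
    using int_phi'_ST[of "\<lambda>_. 1" 1 c] c by simp
  show "(phi \<longlongrightarrow> phi c) (at_right c)"
    using isCont_phi[OF c] by (simp add: isCont_def filterlim_at_split)
qed (auto intro: phi_deriv isCont_phi' phi_top)

lemma isCont_jT: "isCont (jT T) u"
  unfolding jT_def using isCont_sinc
  by (intro continuous_intros isCont_psi isCont_o2[where f="\<lambda>u. T * w u" and g=sinc] isCont_w) auto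

lemma IBP: "c > 0 \<Longrightarrow> T \<ge> 0 \<Longrightarrow>
  (\<integral>u. indicator {c..} u * jT T u \<partial>lborel) = - phi c * ST T c - (\<integral>u. indicator {c..} u * (phi' u * ST T u) \<partial>lborel)"
proof -
  assume c: "c > 0" and T: "T \<ge> 0"
  have i1: "integrable lborel (\<lambda>u. indicator {c..} u * (phi' u * ST T u))"
    using int_phi'_ST[of "ST T" BS c] c Si_bound by (simp add: ST_def)
  have i2: "integrable lborel (\<lambda>u. indicator {c..} u * jT T u)" using int_jT[of "{c..}" T] T by simp
  have "(\<integral>u. indicator {c..} u * (phi' u * ST T u + jT T u) \<partial>lborel) = - (phi c * ST T c)"
  proof (rule FTC_inf[where F="\<lambda>u. phi u * ST T u"])
    fix u assume u: "c < u"
    then have u0: "u > 0" using c by simp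
    have "((\<lambda>u. phi u * ST T u) has_real_derivative phi' u * ST T u + phi u * (sinc (T * w u) * (T * u))) (at u)"
      by (rule DERIV_cong[OF DERIV_mult[OF phi_deriv[OF u0] ST_deriv[of T u]]]) (simp add: algebra_simps)
    moreover have "phi u * (sinc (T * w u) * (T * u)) = jT T u"
      using u0 by (simp add: phi_def jT_def field_simps)
    ultimately show "((\<lambda>u. phi u * ST T u) has_real_derivative phi' u * ST T u + jT T u) (at u)" by simp
    show "isCont (\<lambda>u. phi' u * ST T u + jT T u) u"
      by (intro continuous_intros isCont_phi' isCont_ST isCont_jT u0)
  next
    show "integrable lborel (\<lambda>u. indicator {c..} u * (phi' u * ST T u + jT T u))"
      using Bochner_Integration.integrable_add[OF i1 i2] by (simp add: distrib_left)
    show "((\<lambda>u. phi u * ST T u) \<longlongrightarrow> phi c * ST T c) (at_right c)"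
      using isCont_phi[OF c] isCont_ST[where T=T and u=c, unfolded isCont_def]
      by (intro tendsto_intros) (auto simp: isCont_def filterlim_at_split)
    show "((\<lambda>u. phi u * ST T u) \<longlongrightarrow> 0) at_top"
    proof (rule Lim_null_comparison)
      show "\<forall>\<^sub>F u in at_top. norm (phi u * ST T u) \<le> BS * (2 * E0 / u)"
        using eventually_gt_at_top[of 0]
      proof eventually_elim
        case (elim u)
        have "\<bar>phi u\<bar> * \<bar>ST T u\<bar> \<le> (2 * E0 / u) * BS"
          using phi_pos[OF elim] phi_le[OF elim] Si_bound[of "T * w u"]
          by (intro mult_mono) (auto simp: ST_def)
        then show ?case by (simp add: abs_mult mult_ac)
      qed
      show "((\<lambda>u. BS * (2 * E0 / u)) \<longlongrightarrow> 0) at_top"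
        using tendsto_mult_right_zero[OF phi_top] 
        by (intro tendsto_mult_right_zero tendsto_divide_0[OF tendsto_const] filterlim_at_top_imp_at_infinity[OF filterlim_ident])
    qed
  qed
  moreover have "(\<integral>u. indicator {c..} u * (phi' u * ST T u + jT T u) \<partial>lborel) =
     (\<integral>u. indicator {c..} u * (phi' u * ST T u) \<partial>lborel) + (\<integral>u. indicator {c..} u * jT T u \<partial>lborel)"
    using Bochner_Integration.integral_add[OF i1 i2] by (simp add: distrib_left)
  ultimately show ?thesis by simp
qed

definition Cb :: real where
  "Cb = 8 * E0 * u1 / x + BS * (2 * E0 / u1) + BS * (2 * (\<epsilon> + 1 / u1\<^sup>2)) * (\<integral>u. psi u \<partial>lborel)"

lemma jT_bound2: "T \<ge> 0 \<Longrightarrow> 0 \<le> u \<Longrightarrow> u \<le> u1 \<Longrightarrow> \<bar>jT T u\<bar> \<le> 8 * E0 / x"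
proof -
  assume T: "T \<ge> 0" and u: "0 \<le> u" "u \<le> u1"
  have wu: "w u \<le> - x / 4" using w_u1 u by simp
  show ?thesis
  proof (cases "T = 0")
    case True then show ?thesis using x by (simp add: jT_def E0_def)
  next
    case False
    then have T0: "T > 0" using T by simp
    have "w u < 0" using wu x by linarith
    then have nz: "T * w u \<noteq> 0" using T0 by simp
    have "\<bar>jT T u\<bar> = psi u * (2 * T) * \<bar>sinc (T * w u)\<bar>"
      unfolding jT_def using psi_pos[of u] T by (simp add: abs_mult)
    also have "\<dots> \<le> E0 * (2 * T) * (1 / \<bar>T * w u\<bar>)"
      using psi_le[of u] abs_sinc_le2[OF nz] psi_pos[of u] T by (intro mult_mono) auto
    also have "\<dots> = 2 * E0 / \<bar>w u\<bar>" using T0 by (simp add: abs_mult)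
    also have "\<dots> \<le> 2 * E0 / (x / 4)"
    proof -
      have q1: "x / 4 \<le> \<bar>w u\<bar>" using wu x by linarith
      have q2: "0 < \<bar>w u\<bar> * (x / 4)" using \<open>w u < 0\<close> x by (simp add: mult_neg_pos)
      have q3: "0 \<le> 2 * E0" by (simp add: E0_def)
      show ?thesis by (rule divide_left_mono[OF q1 q3 q2])
    qed
    finally show ?thesis by simp
  qed
qed

lemma int_psi_nn: "0 \<le> (\<integral>u. psi u \<partial>lborel)"
  using psi_pos by (intro integral_nonneg_AE) (auto intro: less_imp_le)

lemma tail_bound: "u1 \<le> c \<Longrightarrow> T \<ge> 0 \<Longrightarrow>
  \<bar>\<integral>u. indicator {c..} u * jT T u \<partial>lborel\<bar> \<le> BS * (2 * E0 / u1) + BS * (2 * (\<epsilon> + 1 / u1\<^sup>2)) * (\<integral>u. psi u \<partial>lborel)"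
proof -
  assume c: "u1 \<le> c" and T: "T \<ge> 0"
  have c0: "c > 0" using c u1_pos by simp
  have h1: "\<bar>phi c * ST T c\<bar> \<le> (2 * E0 / u1) * BS"
  proof -
    have "phi c \<le> 2 * E0 / u1"
      using phi_le[OF c0] c u1_pos by (smt (verit) E0_def divide_left_mono exp_gt_zero mult_pos_pos)
    then show ?thesis
      unfolding abs_mult using phi_pos[OF c0] Si_bound[of "T * w c"]
      by (intro mult_mono) (auto simp: ST_def)
  qed
  have h2: "\<bar>\<integral>u. indicator {c..} u * (phi' u * ST T u) \<partial>lborel\<bar> \<le> BS * (2 * (\<epsilon> + 1 / u1\<^sup>2)) * (\<integral>u. psi u \<partial>lborel)"
  proof -
    have "\<bar>\<integral>u. indicator {c..} u * (phi' u * ST T u) \<partial>lborel\<bar> \<le> (\<integral>u. \<bar>indicator {c..} u * (phi' u * ST T u)\<bar> \<partial>lborel)"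
      by (rule integral_abs_bound)
    also have "\<dots> \<le> (\<integral>u. BS * (2 * (\<epsilon> + 1 / u1\<^sup>2)) * psi u \<partial>lborel)"
    proof (rule integral_mono)
      show "integrable lborel (\<lambda>u. \<bar>indicator {c..} u * (phi' u * ST T u)\<bar>)"
        using int_phi'_ST[of "ST T" BS c] c0 Si_bound by (simp add: ST_def)
      show "integrable lborel (\<lambda>u. BS * (2 * (\<epsilon> + 1 / u1\<^sup>2)) * psi u)" using int_psi by simp
      fix u show "\<bar>indicator {c..} u * (phi' u * ST T u)\<bar> \<le> BS * (2 * (\<epsilon> + 1 / u1\<^sup>2)) * psi u"
      proof (cases "c \<le> u")
        case True
        have "\<bar>phi' u\<bar> * \<bar>ST T u\<bar> \<le> (2 * (\<epsilon> + 1 / u1\<^sup>2) * psi u) * BS"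
          using phi'_bound[OF u1_pos, of u] True c Si_bound[of "T * w u"]
          by (intro mult_mono) (auto simp: ST_def)
        then show ?thesis using True by (simp add: abs_mult mult_ac)
      next
        case False
        have "0 \<le> BS * (2 * (\<epsilon> + 1 / u1\<^sup>2)) * psi u"
          using psi_pos[of u] BS_nonneg e by (intro mult_nonneg_nonneg) auto
        then show ?thesis using False by simp
      qed
    qed
    also have "\<dots> = BS * (2 * (\<epsilon> + 1 / u1\<^sup>2)) * (\<integral>u. psi u \<partial>lborel)" by simp
    finally show ?thesis .
  qed
  have h3: "\<bar>- (phi c * ST T c) - p\<bar> \<le> \<bar>phi c * ST T c\<bar> + \<bar>p\<bar>" for p :: real by arith
  have h4: "(2 * E0 / u1) * BS = BS * (2 * E0 / u1)" by simp
  show ?thesis unfolding IBP[OF c0 T] using h1 h2 h3[of "\<integral>u. indicator {c..} u * (phi' u * ST T u) \<partial>lborel"] h4 by linarith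
qed

lemma J_bound: "a \<ge> 0 \<Longrightarrow> T \<ge> 0 \<Longrightarrow> \<bar>J T a\<bar> \<le> Cb"
proof -
  assume a: "a \<ge> 0" and T: "T \<ge> 0"
  define b where "b = sqrt a"
  define m where "m = max b u1"
  have b: "b \<ge> 0" using a by (simp add: b_def)
  have split: "J T a = (\<integral>u. indicator {b..<m} u * jT T u \<partial>lborel) + (\<integral>u. indicator {m..} u * jT T u \<partial>lborel)"
  proof -
    have "J T a = (\<integral>u. indicator {b..<m} u * jT T u + indicator {m..} u * jT T u \<partial>lborel)"
      unfolding J_def b_def[symmetric] m_def
      by (intro Bochner_Integration.integral_cong) (auto simp: indicator_def)
    also have "\<dots> = (\<integral>u. indicator {b..<m} u * jT T u \<partial>lborel) + (\<integral>u. indicator {m..} u * jT T u \<partial>lborel)"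
      by (intro Bochner_Integration.integral_add int_jT T) auto
    finally show ?thesis .
  qed
  have p1: "\<bar>\<integral>u. indicator {b..<m} u * jT T u \<partial>lborel\<bar> \<le> 8 * E0 * u1 / x"
  proof -
    have "\<bar>\<integral>u. indicator {b..<m} u * jT T u \<partial>lborel\<bar> \<le> (\<integral>u. \<bar>indicator {b..<m} u * jT T u\<bar> \<partial>lborel)"
      by (rule integral_abs_bound)
    also have "\<dots> \<le> (\<integral>u. indicator {b..<m} u * (8 * E0 / x) \<partial>lborel)"
    proof (rule integral_mono)
      show "integrable lborel (\<lambda>u. \<bar>indicator {b..<m} u * jT T u\<bar>)" using int_jT[of "{b..<m}" T] T by simp
      show "integrable lborel (\<lambda>u. indicator {b..<m} u * (8 * E0 / x))" by (rule int_Ico_c)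
      fix u show "\<bar>indicator {b..<m} u * jT T u\<bar> \<le> indicator {b..<m} u * (8 * E0 / x)"
      proof (cases "u \<in> {b..<m}")
        case True
        then have "u \<le> u1" "0 \<le> u" using b by (auto simp: m_def)
        then show ?thesis using jT_bound2[OF T] True by (simp add: abs_mult)
      qed simp
    qed
    also have "\<dots> = (m - b) * (8 * E0 / x)" by (simp add: m_def)
    also have "\<dots> \<le> u1 * (8 * E0 / x)"
      using b x u1_pos by (intro mult_right_mono) (auto simp: m_def E0_def)
    also have "u1 * (8 * E0 / x) = 8 * E0 * u1 / x" by simp
    finally show ?thesis .
  qed
  have p2: "\<bar>\<integral>u. indicator {m..} u * jT T u \<partial>lborel\<bar> \<le> BS * (2 * E0 / u1) + BS * (2 * (\<epsilon> + 1 / u1\<^sup>2)) * (\<integral>u. psi u \<partial>lborel)"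
    by (rule tail_bound) (auto simp: m_def T)
  show ?thesis using split p1 p2 unfolding Cb_def by linarith
qed

end

context kern begin

definition d :: real where "d = sqrt x"
lemma d_pos: "d > 0" using x by (simp add: d_def)
lemma w_d: "w d = 0" using x by (simp add: w_def d_def)
lemma phi_d: "phi d = 2 / sqrt x" using w_d by (simp add: phi_def psi_def d_def)

lemma sgn_w: "u > 0 \<Longrightarrow> sgn (w u) = (if u < d then -1 else if u = d then 0 else 1)"
proof -
  assume u: "u > 0"
  have "w u < 0 \<longleftrightarrow> u < d"
  proof -
    have "w u < 0 \<longleftrightarrow> u\<^sup>2 < (sqrt x)\<^sup>2" using x by (simp add: w_def)
    also have "\<dots> \<longleftrightarrow> sqrt (u\<^sup>2) < sqrt ((sqrt x)\<^sup>2)" by (rule real_sqrt_less_iff[symmetric])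
    also have "\<dots> \<longleftrightarrow> u < sqrt x" using u x by simp
    finally show ?thesis by (simp add: d_def)
  qed
  moreover have "w u = 0 \<longleftrightarrow> u = d"
  proof -
    have "w u = 0 \<longleftrightarrow> u\<^sup>2 = (sqrt x)\<^sup>2" using x by (simp add: w_def)
    also have "\<dots> \<longleftrightarrow> sqrt (u\<^sup>2) = sqrt ((sqrt x)\<^sup>2)" by (rule real_sqrt_eq_iff[symmetric])
    also have "\<dots> \<longleftrightarrow> u = sqrt x" using u x by simp
    finally show ?thesis by (simp add: d_def)
  qed
  ultimately show ?thesis by (auto simp: sgn_if)
qed

lemma J_lim: "a > 0 \<Longrightarrow> a \<noteq> x \<Longrightarrow> ((\<lambda>T. J T a) \<longlongrightarrow> (if a < x then 2 * pi / sqrt x else 0)) at_top"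
proof -
  assume a: "a > 0" "a \<noteq> x"
  define b where "b = sqrt a"
  have b: "b > 0" using a by (simp add: b_def)
  have bd: "b \<noteq> d" using a x by (simp add: b_def d_def)
  have ax: "a < x \<longleftrightarrow> b < d" using a x by (simp add: b_def d_def)
  define Ilim where "Ilim = (\<integral>u. indicator {b..} u * (phi' u * (pi / 2 * sgn (w u))) \<partial>lborel)"
  have eqJ: "\<forall>\<^sub>F T in at_top. J T a = - phi b * ST T b - (\<integral>u. indicator {b..} u * (phi' u * ST T u) \<partial>lborel)"
    using eventually_ge_at_top[of 0] by eventually_elim (simp add: J_def b_def[symmetric] IBP[OF b])
  have l1: "((\<lambda>T. ST T b) \<longlongrightarrow> pi / 2 * sgn (w b)) at_top"
    unfolding ST_def by (rule Si_lim)
  have l2: "((\<lambda>T. \<integral>u. indicator {b..} u * (phi' u * ST T u) \<partial>lborel) \<longlongrightarrow> Ilim) at_top"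
    unfolding Ilim_def
  proof (rule integral_dominated_convergence_at_top[where w="\<lambda>u. BS * (2 * (\<epsilon> + 1 / b\<^sup>2) * psi u)"])
    show "integrable lborel (\<lambda>u. BS * (2 * (\<epsilon> + 1 / b\<^sup>2) * psi u))" using int_psi by simp
    show "AE u in lborel. ((\<lambda>T. indicator {b..} u * (phi' u * ST T u)) \<longlongrightarrow> indicator {b..} u * (phi' u * (pi / 2 * sgn (w u)))) at_top"
      unfolding ST_def by (intro AE_I2 tendsto_intros Si_lim)
    show "\<forall>\<^sub>F T in at_top. AE u in lborel. norm (indicator {b..} u * (phi' u * ST T u)) \<le> BS * (2 * (\<epsilon> + 1 / b\<^sup>2) * psi u)"
    proof (intro always_eventually allI AE_I2)
      fix T u
      show "norm (indicator {b..} u * (phi' u * ST T u)) \<le> BS * (2 * (\<epsilon> + 1 / b\<^sup>2) * psi u)"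
      proof (cases "b \<le> u")
        case True
        have "\<bar>phi' u\<bar> * \<bar>ST T u\<bar> \<le> (2 * (\<epsilon> + 1 / b\<^sup>2) * psi u) * BS"
          using phi'_bound[OF b True] Si_bound[of "T * w u"] by (intro mult_mono) (auto simp: ST_def)
        then show ?thesis using True by (simp add: abs_mult mult_ac)
      next
        case False
        have "0 \<le> BS * (2 * (\<epsilon> + 1 / b\<^sup>2) * psi u)"
          using psi_pos[of u] BS_nonneg e by (intro mult_nonneg_nonneg) auto
        then show ?thesis using False by simp
      qed
    qed
  qed (auto simp: w_def ST_def)
  have "((\<lambda>T. J T a) \<longlongrightarrow> - phi b * (pi / 2 * sgn (w b)) - Ilim) at_top"
    using tendsto_diff[OF tendsto_mult[OF tendsto_const l1] l2]
    by (rule Lim_transform_eventually) (use eqJ in \<open>auto elim: eventually_mono\<close>)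
  moreover have "- phi b * (pi / 2 * sgn (w b)) - Ilim = (if a < x then 2 * pi / sqrt x else 0)"
  proof (cases "b < d")
    case True
    have "Ilim = (\<integral>u. pi / 2 * (- (indicator {b..} u * phi' u) + 2 * (indicator {d..} u * phi' u)) \<partial>lborel)"
      unfolding Ilim_def
    proof (rule integral_cong_AE)
      show "AE u in lborel. indicator {b..} u * (phi' u * (pi / 2 * sgn (w u))) = pi / 2 * (- (indicator {b..} u * phi' u) + 2 * (indicator {d..} u * phi' u))"
        using AE_lborel_singleton[of d]
      proof eventually_elim
        case (elim u)
        show ?case
        proof (cases "b \<le> u")
          case True then have "u > 0" using b by simp
          then show ?thesis using sgn_w[of u] True \<open>b < d\<close> elim by (auto simp: indicator_def algebra_simps)
        qed (use \<open>b < d\<close> in \<open>auto simp: indicator_def\<close>)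
      qed
    qed (auto simp: w_def)
    also have "\<dots> = pi / 2 * (- (\<integral>u. indicator {b..} u * phi' u \<partial>lborel) + 2 * (\<integral>u. indicator {d..} u * phi' u \<partial>lborel))"
    proof -
      have i: "integrable lborel (\<lambda>u. indicator {c..} u * phi' u)" if "c > 0" for c
        using int_phi'_ST[of "\<lambda>_. 1" 1 c] that by simp
      show ?thesis using i[OF b] i[OF d_pos] by simp
    qed
    also have "\<dots> = pi / 2 * (phi b - 2 * phi d)" using FTC_phi'[OF b] FTC_phi'[OF d_pos] by simp
    finally have "Ilim = pi / 2 * (phi b - 2 * phi d)" .
    moreover have "sgn (w b) = -1" using sgn_w[OF b] True by simp
    ultimately show ?thesis using True ax by (simp add: phi_d algebra_simps)
  next
    case False
    then have bd': "d < b" using bd by simp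
    have "Ilim = (\<integral>u. pi / 2 * (indicator {b..} u * phi' u) \<partial>lborel)"
      unfolding Ilim_def
    proof (rule Bochner_Integration.integral_cong)
      fix u show "indicator {b..} u * (phi' u * (pi / 2 * sgn (w u))) = pi / 2 * (indicator {b..} u * phi' u)"
      proof (cases "b \<le> u")
        case True then have "u > 0" using b by simp
        then show ?thesis using sgn_w[of u] True bd' by (auto simp: indicator_def)
      qed (simp add: indicator_def)
    qed simp
    also have "\<dots> = pi / 2 * (- phi b)" using FTC_phi'[OF b] by simp
    finally have "Ilim = pi / 2 * (- phi b)" .
    moreover have "sgn (w b) = 1" using sgn_w[OF b] bd' by simp
    ultimately show ?thesis using False ax by simp
  qed
  ultimately show ?thesis by simp
qed

end

lemma deriv_integral:
  fixes g g' :: "complex \<Rightarrow> 'b \<Rightarrow> complex" and M :: "'b measure"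
  assumes S: "open S"
    and meas: "\<And>p. p \<in> S \<Longrightarrow> g p \<in> borel_measurable M"
    and meas': "\<And>p. p \<in> S \<Longrightarrow> g' p \<in> borel_measurable M"
    and int: "\<And>p. p \<in> S \<Longrightarrow> integrable M (g p)"
    and der: "\<And>p y. p \<in> S \<Longrightarrow> y \<in> space M \<Longrightarrow> ((\<lambda>p. g p y) has_field_derivative g' p y) (at p)"
    and p: "p \<in> S"
    and r: "r > 0" and W: "integrable M W" and rS: "cball p r \<subseteq> S"
    and Wb: "\<And>q y. q \<in> cball p r \<Longrightarrow> y \<in> space M \<Longrightarrow> norm (g' q y) \<le> W y"
  shows "((\<lambda>p. \<integral>y. g p y \<partial>M) has_field_derivative (\<integral>y. g' p y \<partial>M)) (at p)"
proof -
  have lip: "norm (g q y - g p y) \<le> W y * norm (q - p)" if q: "q \<in> cball p r" and y: "y \<in> space M" for q y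
  proof -
    have d1: "((\<lambda>q. g q y) has_field_derivative g' z y) (at z within cball p r)" if "z \<in> cball p r" for z
    proof -
      have "z \<in> S" using that rS by blast
      then show ?thesis by (rule has_field_derivative_at_within[OF der[OF _ y]])
    qed
    have d2: "norm (g' z y) \<le> W y" if "z \<in> cball p r" for z using Wb[OF that y] .
    have pc: "p \<in> cball p r" using r by simp
    show ?thesis by (rule field_differentiable_bound[OF convex_cball d1 d2 q pc])
  qed
  show ?thesis
    unfolding has_field_derivative_iff
  proof (subst tendsto_at_iff_sequentially, intro allI impI)
    fix Xs :: "nat \<Rightarrow> complex"
    assume Xs1: "\<forall>i. Xs i \<in> UNIV - {p}" and Xs2: "Xs \<longlonglongrightarrow> p"
    have "\<forall>\<^sub>F n in sequentially. dist (Xs n) p < r" using tendstoD[OF Xs2 r] .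
    then obtain N0 where N0': "\<And>n. n \<ge> N0 \<Longrightarrow> dist (Xs n) p < r"
      by (auto simp: eventually_sequentially)
    have N0: "Xs n \<in> ball p r" if "n \<ge> N0" for n using N0'[OF that] by (simp add: dist_commute)
    define Y where "Y n = Xs (n + N0)" for n
    have Yb: "Y n \<in> cball p r" for n using N0[of "n + N0"] by (auto simp: Y_def)
    have Yne: "Y n \<noteq> p" for n using Xs1 by (auto simp: Y_def)
    have YS: "Y n \<in> S" for n using Yb rS by auto
    have Ylim: "Y \<longlonglongrightarrow> p" unfolding Y_def using LIMSEQ_ignore_initial_segment[OF Xs2] .
    have Yat: "filterlim Y (at p) sequentially"
      using Ylim Yne by (intro filterlim_atI) auto
    have lim: "(\<lambda>n. (\<integral>y. (g (Y n) y - g p y) / (Y n - p) \<partial>M)) \<longlonglongrightarrow> (\<integral>y. g' p y \<partial>M)"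
    proof (rule integral_dominated_convergence[where w=W])
      show "(\<lambda>y. (g (Y n) y - g p y) / (Y n - p)) \<in> borel_measurable M" for n
        using meas[OF YS] meas[OF p] by measurable
      show "g' p \<in> borel_measurable M" by (rule meas'[OF p])
      show "integrable M W" by (rule W)
      show "AE y in M. (\<lambda>n. (g (Y n) y - g p y) / (Y n - p)) \<longlonglongrightarrow> g' p y"
      proof (intro AE_I2)
        fix y assume y: "y \<in> space M"
        have "((\<lambda>q. (g q y - g p y) / (q - p)) \<longlongrightarrow> g' p y) (at p)"
          using der[OF p y] by (simp add: has_field_derivative_iff)
        from filterlim_compose[OF this Yat] show "(\<lambda>n. (g (Y n) y - g p y) / (Y n - p)) \<longlonglongrightarrow> g' p y" .
      qed
      show "AE y in M. norm ((g (Y n) y - g p y) / (Y n - p)) \<le> W y" for n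
      proof (intro AE_I2)
        fix y assume y: "y \<in> space M"
        have "norm (g (Y n) y - g p y) \<le> W y * norm (Y n - p)" by (rule lip[OF Yb y])
        then show "norm ((g (Y n) y - g p y) / (Y n - p)) \<le> W y"
          using Yne[of n] by (simp add: norm_divide pos_divide_le_eq)
      qed
    qed
    have eqn: "(\<integral>y. (g (Y n) y - g p y) / (Y n - p) \<partial>M) = ((\<integral>y. g (Y n) y \<partial>M) - (\<integral>y. g p y \<partial>M)) / (Y n - p)" for n
    proof -
      have "(\<integral>y. (g (Y n) y - g p y) / (Y n - p) \<partial>M) = (\<integral>y. g (Y n) y - g p y \<partial>M) / (Y n - p)"
        by (rule integral_divide_zero)
      also have "(\<integral>y. g (Y n) y - g p y \<partial>M) = (\<integral>y. g (Y n) y \<partial>M) - (\<integral>y. g p y \<partial>M)"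
        using int[OF YS] int[OF p] by (rule Bochner_Integration.integral_diff)
      finally show ?thesis .
    qed
    from lim have "(\<lambda>n. ((\<integral>y. g (Y n) y \<partial>M) - (\<integral>y. g p y \<partial>M)) / (Y n - p)) \<longlonglongrightarrow> (\<integral>y. g' p y \<partial>M)"
      unfolding eqn .
    then show "((\<lambda>q. ((\<integral>y. g q y \<partial>M) - (\<integral>y. g p y \<partial>M)) / (q - p)) \<circ> Xs) \<longlonglongrightarrow> (\<integral>y. g' p y \<partial>M)"
      unfolding Y_def comp_def by (rule LIMSEQ_offset)
  qed
qed


definition kf :: "complex \<Rightarrow> real \<Rightarrow> complex" where "kf p u = exp (- p * (complex_of_real u)\<^sup>2 / 2)"
definition kR :: "complex \<Rightarrow> real \<Rightarrow> real \<Rightarrow> complex" where "kR p a u = (if sqrt a \<le> u then kf p u else 0)"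
definition kR' :: "complex \<Rightarrow> real \<Rightarrow> real \<Rightarrow> complex" where
  "kR' p a u = (if sqrt a \<le> u then - (complex_of_real u)\<^sup>2 / 2 * kf p u else 0)"
definition R :: "complex \<Rightarrow> real \<Rightarrow> complex" where "R p a = (\<integral>u. kR p a u \<partial>lborel)"
definition R' :: "complex \<Rightarrow> real \<Rightarrow> complex" where "R' p a = (\<integral>u. kR' p a u \<partial>lborel)"

lemma norm_kf: "norm (kf p u) = exp (- Re p * u\<^sup>2 / 2)"
  unfolding kf_def by (simp add: norm_exp_eq_Re)

lemma kf_deriv: "((\<lambda>p. kf p u) has_field_derivative (- (complex_of_real u)\<^sup>2 / 2 * kf p u)) (at p)"
  unfolding kf_def by (auto intro!: derivative_eq_intros simp: field_simps)

lemma kR_joint_meas: "(\<lambda>z::(complex \<times> real) \<times> real. kR (fst (fst z)) (snd (fst z)) (snd z)) \<in> borel_measurable ((borel \<Otimes>\<^sub>M borel) \<Otimes>\<^sub>M lborel)"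
  unfolding kR_def kf_def by measurable

lemma kR'_joint_meas: "(\<lambda>z::(complex \<times> real) \<times> real. kR' (fst (fst z)) (snd (fst z)) (snd z)) \<in> borel_measurable ((borel \<Otimes>\<^sub>M borel) \<Otimes>\<^sub>M lborel)"
  unfolding kR'_def kf_def by measurable

lemma R_joint_meas[measurable]: "(\<lambda>z::complex \<times> real. R (fst z) (snd z)) \<in> borel_measurable (borel \<Otimes>\<^sub>M borel)"
proof -
  have "(\<lambda>z::complex \<times> real. \<integral>u. kR (fst z) (snd z) u \<partial>lborel) \<in> borel_measurable (borel \<Otimes>\<^sub>M borel)"
    using kR_joint_meas by (intro lborel.borel_measurable_lebesgue_integral) (simp add: split_beta')
  then show ?thesis by (simp add: R_def)
qed

lemma R'_joint_meas[measurable]: "(\<lambda>z::complex \<times> real. R' (fst z) (snd z)) \<in> borel_measurable (borel \<Otimes>\<^sub>M borel)"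
proof -
  have "(\<lambda>z::complex \<times> real. \<integral>u. kR' (fst z) (snd z) u \<partial>lborel) \<in> borel_measurable (borel \<Otimes>\<^sub>M borel)"
    using kR'_joint_meas by (intro lborel.borel_measurable_lebesgue_integral) (simp add: split_beta')
  then show ?thesis by (simp add: R'_def)
qed

lemma kR_meas[measurable]: "kR p a \<in> borel_measurable borel"
  unfolding kR_def kf_def by measurable
lemma kR'_meas[measurable]: "kR' p a \<in> borel_measurable borel"
  unfolding kR'_def kf_def by measurable

lemma norm_kR: "norm (kR p a u) \<le> exp (- Re p * u\<^sup>2 / 2)"
  by (simp add: kR_def norm_kf)

lemma norm_kR': "norm (kR' p a u) \<le> u\<^sup>2 / 2 * exp (- Re p * u\<^sup>2 / 2)"
  by (simp add: kR'_def norm_kf norm_mult norm_divide norm_power)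

lemma int_kR: "Re p > 0 \<Longrightarrow> integrable lborel (kR p a)"
proof (rule Bochner_Integration.integrable_bound[where f="\<lambda>u. exp (- (Re p / 2) * u\<^sup>2)"])
  assume "Re p > 0"
  then show "integrable lborel (\<lambda>u. exp (- (Re p / 2) * u\<^sup>2))"
    using int_gauss_mom[of "Re p / 2" 0] by simp
  show "AE u in lborel. norm (kR p a u) \<le> norm (exp (- (Re p / 2) * u\<^sup>2))"
    using norm_kR[of p a] by (intro AE_I2) (simp add: field_simps)
qed simp

lemma R_bound: "Re p \<ge> \<delta> \<Longrightarrow> \<delta> > 0 \<Longrightarrow> norm (R p a) \<le> (\<integral>u. exp (- (\<delta> / 2) * u\<^sup>2) \<partial>lborel)"
proof -
  assume d: "Re p \<ge> \<delta>" "\<delta> > 0"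
  have "norm (R p a) \<le> (\<integral>u. norm (kR p a u) \<partial>lborel)" unfolding R_def by (rule integral_norm_bound)
  also have "\<dots> \<le> (\<integral>u. exp (- (\<delta> / 2) * u\<^sup>2) \<partial>lborel)"
  proof (rule integral_mono)
    show "integrable lborel (\<lambda>u. norm (kR p a u))" using int_kR[of p a] d by simp
    show "integrable lborel (\<lambda>u. exp (- (\<delta> / 2) * u\<^sup>2))" using int_gauss_mom[of "\<delta> / 2" 0] d by simp
    fix u
    have "exp (- Re p * u\<^sup>2 / 2) \<le> exp (- (\<delta> / 2) * u\<^sup>2)"
      using d by (simp add: mult_right_mono)
    then show "norm (kR p a u) \<le> exp (- (\<delta> / 2) * u\<^sup>2)" using norm_kR[of p a u] by linarith
  qed
  finally show ?thesis .
qed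

lemma R'_bound: "Re p \<ge> \<delta> \<Longrightarrow> \<delta> > 0 \<Longrightarrow> norm (R' p a) \<le> (\<integral>u. u\<^sup>2 / 2 * exp (- (\<delta> / 2) * u\<^sup>2) \<partial>lborel)"
proof -
  assume d: "Re p \<ge> \<delta>" "\<delta> > 0"
  have i: "integrable lborel (\<lambda>u. u\<^sup>2 / 2 * exp (- (\<delta> / 2) * u\<^sup>2))"
    using int_gauss_mom[of "\<delta> / 2" 2] d by simp
  have b: "norm (kR' p a u) \<le> u\<^sup>2 / 2 * exp (- (\<delta> / 2) * u\<^sup>2)" for u
  proof -
    have "exp (- Re p * u\<^sup>2 / 2) \<le> exp (- (\<delta> / 2) * u\<^sup>2)"
      using d by (simp add: mult_right_mono)
    then have "u\<^sup>2 / 2 * exp (- Re p * u\<^sup>2 / 2) \<le> u\<^sup>2 / 2 * exp (- (\<delta> / 2) * u\<^sup>2)"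
      by (intro mult_left_mono) auto
    then show ?thesis using norm_kR'[of p a u] by linarith
  qed
  have "norm (R' p a) \<le> (\<integral>u. norm (kR' p a u) \<partial>lborel)" unfolding R'_def by (rule integral_norm_bound)
  also have "\<dots> \<le> (\<integral>u. u\<^sup>2 / 2 * exp (- (\<delta> / 2) * u\<^sup>2) \<partial>lborel)"
  proof (rule integral_mono[OF _ i b])
    show "integrable lborel (\<lambda>u. norm (kR' p a u))"
    proof (rule Bochner_Integration.integrable_bound[OF i])
      show "AE u in lborel. norm (norm (kR' p a u)) \<le> norm (u\<^sup>2 / 2 * exp (- (\<delta> / 2) * u\<^sup>2))"
        using b by (intro AE_I2) (simp del: norm_divide)
    qed simp
  qed
  finally show ?thesis .
qed

lemma R_deriv: "Re p > 0 \<Longrightarrow> ((\<lambda>p. R p a) has_field_derivative R' p a) (at p)"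
proof -
  assume p: "Re p > 0"
  define \<delta> where "\<delta> = Re p / 2"
  have \<delta>: "\<delta> > 0" using p by (simp add: \<delta>_def)
  have cb: "cball p \<delta> \<subseteq> {q. Re q > 0}"
  proof
    fix q assume "q \<in> cball p \<delta>"
    then have "cmod (p - q) \<le> \<delta>" by (simp add: dist_norm)
    moreover have "\<bar>Re (p - q)\<bar> \<le> cmod (p - q)" by (rule abs_Re_le_cmod)
    ultimately show "q \<in> {q. Re q > 0}" using p by (simp add: \<delta>_def)
  qed
  have cb2: "Re q \<ge> \<delta>" if "q \<in> cball p \<delta>" for q
  proof -
    have "cmod (p - q) \<le> \<delta>" using that by (simp add: dist_norm)
    moreover have "\<bar>Re (p - q)\<bar> \<le> cmod (p - q)" by (rule abs_Re_le_cmod)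
    ultimately show ?thesis by (simp add: \<delta>_def)
  qed
  show ?thesis
    unfolding R_def R'_def
  proof (rule deriv_integral[where S="{q. Re q > 0}" and r=\<delta> and W="\<lambda>u. u\<^sup>2 / 2 * exp (- (\<delta> / 2) * u\<^sup>2)"])
    show "open {q. Re q > 0}" by (simp add: open_halfspace_Re_gt)
    show "integrable lborel (\<lambda>u. u\<^sup>2 / 2 * exp (- (\<delta> / 2) * u\<^sup>2))"
      using int_gauss_mom[of "\<delta> / 2" 2] \<delta> by simp
    show "\<And>q y. q \<in> cball p \<delta> \<Longrightarrow> y \<in> space lborel \<Longrightarrow> cmod (kR' q a y) \<le> y\<^sup>2 / 2 * exp (- (\<delta> / 2) * y\<^sup>2)"
    proof -
      fix q y assume "q \<in> cball p \<delta>"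
      then have d: "Re q \<ge> \<delta>" by (rule cb2)
      have "exp (- Re q * y\<^sup>2 / 2) \<le> exp (- (\<delta> / 2) * y\<^sup>2)"
        using d by (simp add: mult_right_mono)
      then have "y\<^sup>2 / 2 * exp (- Re q * y\<^sup>2 / 2) \<le> y\<^sup>2 / 2 * exp (- (\<delta> / 2) * y\<^sup>2)"
        by (intro mult_left_mono) auto
      then show "cmod (kR' q a y) \<le> y\<^sup>2 / 2 * exp (- (\<delta> / 2) * y\<^sup>2)" using norm_kR'[of q a y] by linarith
    qed
    show "\<And>q y. q \<in> {q. Re q > 0} \<Longrightarrow> y \<in> space lborel \<Longrightarrow> ((\<lambda>q. kR q a y) has_field_derivative kR' q a y) (at q)"
      unfolding kR_def kR'_def using kf_deriv by auto
  qed (use p \<delta> cb int_kR in auto)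
qed


lemma prod_int:
  fixes h1 h2 :: "real \<Rightarrow> real"
  assumes h1: "integrable lborel h1" and h2: "integrable lborel h2"
  shows "integrable (lborel \<Otimes>\<^sub>M lborel) (\<lambda>z. h1 (fst z) * h2 (snd z))"
proof (rule lborel_pair.Fubini_integrable)
  show "(\<lambda>z. h1 (fst z) * h2 (snd z)) \<in> borel_measurable (lborel \<Otimes>\<^sub>M lborel)"
    using h1 h2 by measurable
  have "integrable lborel (\<lambda>x. \<bar>h1 x\<bar> * (\<integral>y. \<bar>h2 y\<bar> \<partial>lborel))" using h1 by simp
  then show "integrable lborel (\<lambda>x. \<integral>y. norm (h1 (fst (x, y)) * h2 (snd (x, y))) \<partial>lborel)"
    by (simp add: abs_mult)
  show "AE x in lborel. integrable lborel (\<lambda>y. h1 (fst (x, y)) * h2 (snd (x, y)))"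
    using h2 by simp
qed

lemma fourier: "T \<ge> 0 \<Longrightarrow> (\<integral>t. indicator {-T..T} t *\<^sub>R exp (- (\<i> * complex_of_real (t * v))) \<partial>lborel) = complex_of_real (2 * T * sinc (T * v))"
proof -
  assume T: "T \<ge> 0"
  show ?thesis
  proof (cases "v = 0")
    case True then show ?thesis using T by (simp add: scaleR_conv_of_real)
  next
    case False
    define F where "F t = exp (- (\<i> * complex_of_real (t * v))) / (- \<i> * complex_of_real v)" for t
    have "(LBINT t=ereal (-T)..ereal T. exp (- (\<i> * complex_of_real (t * v)))) = F T - F (-T)"
    proof (rule interval_integral_FTC_finite)
      show "continuous_on {min (-T) T..max (-T) T} (\<lambda>t. exp (- (\<i> * complex_of_real (t * v))))"
        by (intro continuous_intros)
      fix t
      show "(F has_vector_derivative exp (- (\<i> * complex_of_real (t * v)))) (at t within {min (- T) T..max (- T) T})"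
        unfolding F_def using False
        by (auto intro!: derivative_eq_intros has_vector_derivative_real_field simp: field_simps)
    qed
    also have "F T - F (-T) = complex_of_real (2 * T * sinc (T * v))"
    proof -
      have "F T - F (-T) = (exp (- (\<i> * complex_of_real (T * v))) - exp (\<i> * complex_of_real (T * v))) / (- \<i> * complex_of_real v)"
        by (simp add: F_def diff_divide_distrib)
      also have "exp (- (\<i> * complex_of_real (T * v))) - exp (\<i> * complex_of_real (T * v)) = - 2 * \<i> * complex_of_real (sin (T * v))"
        by (simp add: exp_minus_Euler exp_Euler algebra_simps sin_of_real[symmetric] del: sin_of_real)
      finally show ?thesis using False T
        by (cases "T = 0") (auto simp: field_simps)
    qed
    finally have "(LBINT t=ereal (-T)..ereal T. exp (- (\<i> * complex_of_real (t * v)))) = complex_of_real (2 * T * sinc (T * v))" .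
    then show ?thesis using T by (simp add: interval_integral_Icc set_lebesgue_integral_def)
  qed
qed

context kern begin

definition et :: "real \<Rightarrow> complex" where "et t = exp (Complex \<epsilon> t * complex_of_real x / 2)"

lemma norm_et: "norm (et t) = E0"
  by (simp add: et_def norm_exp_eq_Re E0_def)

lemma Complex_alt: "Complex \<epsilon> t = complex_of_real \<epsilon> + \<i> * complex_of_real t"
  by (simp add: complex_eq_iff)

lemma et_meas[measurable]: "et \<in> borel_measurable borel"
  unfolding et_def Complex_alt by measurable

lemma kR_et: "kR (Complex \<epsilon> t) a u * et t = (if sqrt a \<le> u then complex_of_real (psi u) * exp (- (\<i> * complex_of_real (t * w u))) else 0)"
proof (cases "sqrt a \<le> u")
  case True
  have "- Complex \<epsilon> t * (complex_of_real u)\<^sup>2 / 2 + Complex \<epsilon> t * complex_of_real x / 2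
      = complex_of_real (- \<epsilon> * w u) + (- (\<i> * complex_of_real (t * w u)))"
    unfolding w_def by (simp add: complex_eq_iff) (simp add: field_simps)
  then have "kf (Complex \<epsilon> t) u * et t = exp (complex_of_real (- \<epsilon> * w u)) * exp (- (\<i> * complex_of_real (t * w u)))"
    unfolding kf_def et_def by (simp add: exp_add[symmetric])
  also have "exp (complex_of_real (- \<epsilon> * w u)) = complex_of_real (psi u)"
    by (simp only: psi_def exp_of_real)
  finally show ?thesis using True by (simp add: kR_def)
qed (simp add: kR_def)

lemma inner: "T \<ge> 0 \<Longrightarrow> (\<integral>t. indicator {-T..T} t *\<^sub>R (R (Complex \<epsilon> t) a * et t) \<partial>lborel) = complex_of_real (J T a)"
proof -
  assume T: "T \<ge> 0"
  define G where "G t u = indicator {-T..T} t *\<^sub>R (kR (Complex \<epsilon> t) a u * et t)" for t u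
  have G_alt: "G t u = indicator {-T..T} t *\<^sub>R (if sqrt a \<le> u then complex_of_real (psi u) * exp (- (\<i> * complex_of_real (t * w u))) else 0)" for t u
    unfolding G_def kR_et ..
  have Gm: "(\<lambda>z. G (fst z) (snd z)) \<in> borel_measurable (lborel \<Otimes>\<^sub>M lborel)"
    unfolding G_alt psi_def w_def by measurable
  have Gint: "integrable (lborel \<Otimes>\<^sub>M lborel) (\<lambda>(t, u). G t u)"
  proof -
    have "integrable (lborel \<Otimes>\<^sub>M lborel) (\<lambda>z. indicator {-T..T} (fst z) * psi (snd z))"
      by (intro prod_int int_psi) (simp add: emeasure_lborel_Icc_eq)
    then show ?thesis
    proof (rule Bochner_Integration.integrable_bound)
      show "(\<lambda>(t, u). G t u) \<in> borel_measurable (lborel \<Otimes>\<^sub>M lborel)" using Gm by (simp add: split_beta')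
      show "AE z in lborel \<Otimes>\<^sub>M lborel. norm (case z of (t, u) \<Rightarrow> G t u) \<le> norm (indicator {-T..T} (fst z) * psi (snd z))"
      proof (intro AE_I2)
        fix z :: "real \<times> real"
        obtain t u where z: "z = (t, u)" by fastforce
        have "norm (G t u) \<le> indicator {-T..T} t * psi u"
          unfolding G_alt using psi_pos[of u] by (auto simp: indicator_def norm_mult)
        then show "norm (case z of (t, u) \<Rightarrow> G t u) \<le> norm (indicator {-T..T} (fst z) * psi (snd z))"
          using psi_pos[of u] by (simp add: z)
      qed
    qed
  qed
  have "(\<integral>t. indicator {-T..T} t *\<^sub>R (R (Complex \<epsilon> t) a * et t) \<partial>lborel) = (\<integral>t. \<integral>u. G t u \<partial>lborel \<partial>lborel)"
  proof (rule Bochner_Integration.integral_cong[OF refl])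
    fix t
    have "R (Complex \<epsilon> t) a * et t = (\<integral>u. kR (Complex \<epsilon> t) a u * et t \<partial>lborel)"
      unfolding R_def by (rule integral_mult_left_zero[symmetric])
    then show "indicator {-T..T} t *\<^sub>R (R (Complex \<epsilon> t) a * et t) = (\<integral>u. G t u \<partial>lborel)"
      unfolding G_def by (simp only: integral_scaleR_right)
  qed
  also have "\<dots> = (\<integral>u. \<integral>t. G t u \<partial>lborel \<partial>lborel)"
    using lborel_pair.Fubini_integral[OF Gint] by simp
  also have "\<dots> = (\<integral>u. complex_of_real (indicator {sqrt a..} u * jT T u) \<partial>lborel)"
  proof (rule Bochner_Integration.integral_cong[OF refl])
    fix u
    show "(\<integral>t. G t u \<partial>lborel) = complex_of_real (indicator {sqrt a..} u * jT T u)"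
    proof (cases "sqrt a \<le> u")
      case True
      have "(\<integral>t. G t u \<partial>lborel) = (\<integral>t. complex_of_real (psi u) * (indicator {-T..T} t *\<^sub>R exp (- (\<i> * complex_of_real (t * w u)))) \<partial>lborel)"
        unfolding G_alt using True by (intro Bochner_Integration.integral_cong) (auto simp: indicator_def)
      also have "\<dots> = complex_of_real (psi u) * (\<integral>t. indicator {-T..T} t *\<^sub>R exp (- (\<i> * complex_of_real (t * w u))) \<partial>lborel)"
        by (rule integral_mult_right_zero)
      also have "\<dots> = complex_of_real (psi u) * complex_of_real (2 * T * sinc (T * w u))"
        by (simp only: fourier[OF T])
      finally show ?thesis using True by (simp add: jT_def indicator_def)
    qed (simp add: G_alt indicator_def)
  qed
  also have "\<dots> = complex_of_real (J T a)" unfolding J_def by (rule integral_complex_of_real)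
  finally show ?thesis .
qed

end


lemma negligible_uminus:
  fixes S :: "real set"
  assumes "negligible S" shows "negligible (uminus ` S)"
  unfolding negligible_def
proof (intro allI)
  fix a b :: real
  have "(indicat_real S has_integral 0) {-b..-a}"
    using assms unfolding negligible_def by (metis interval_cbox)
  then have "((\<lambda>x. indicat_real S (-x)) has_integral 0) {- (-a)..- (-b)}"
    by (subst has_integral_reflect_real) simp
  moreover have "(\<lambda>x. indicat_real S (-x)) = indicat_real (uminus ` S)"
  proof (rule ext)
    fix x :: real
    have "(-x \<in> S) = (x \<in> uminus ` S)" by (force simp: image_iff)
    then show "indicat_real S (-x) = indicat_real (uminus ` S) x" by (simp add: indicator_def)
  qed
  ultimately show "(indicat_real (uminus ` S) has_integral 0) (cbox a b)" by simp
qed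

lemma right_deriv_explicit:
  fixes f :: "real \<Rightarrow> real"
  assumes f: "\<And>a b. f integrable_on {a..b}"
  obtains N where "negligible N"
    "\<And>x e. \<lbrakk>x \<notin> N; 0 < e\<rbrakk> \<Longrightarrow> \<exists>d>0. \<forall>h. 0 < h \<and> h < d \<longrightarrow> \<bar>integral {x..x+h} f / h - f x\<bar> < e"
proof -
  have fi: "\<And>a b::real. f integrable_on cbox a b" using f by simp
  obtain N where N: "negligible N"
    "\<And>x e. \<lbrakk>x \<notin> N; 0 < e\<rbrakk> \<Longrightarrow> \<exists>d>0. \<forall>h. 0 < h \<and> h < d \<longrightarrow> norm (integral (cbox x (x + h *\<^sub>R One)) f /\<^sub>R h ^ DIM(real) - f x) < e"
    by (rule integrable_ccontinuous_explicit[OF fi]) (rule that)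
  show ?thesis
  proof (rule that[OF N(1)])
    fix x e :: real assume "x \<notin> N" "0 < e"
    from N(2)[OF this] obtain d where "d > 0" and d: "\<And>h. 0 < h \<and> h < d \<Longrightarrow> norm (integral (cbox x (x + h *\<^sub>R One)) f /\<^sub>R h ^ DIM(real) - f x) < e"
      by blast
    show "\<exists>d>0. \<forall>h. 0 < h \<and> h < d \<longrightarrow> \<bar>integral {x..x+h} f / h - f x\<bar> < e"
    proof (intro exI[of _ d] conjI allI impI \<open>d > 0\<close>)
      fix h assume "0 < h \<and> h < d"
      from d[OF this] show "\<bar>integral {x..x+h} f / h - f x\<bar> < e" by (simp add: divide_inverse mult.commute)
    qed
  qed
qed

lemma ae_deriv:
  fixes f F :: "real \<Rightarrow> real"
  assumes f: "\<And>a b. f integrable_on {a..b}"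
    and F: "\<And>z y. 0 < z \<Longrightarrow> z \<le> y \<Longrightarrow> F y - F z = integral {z..y} f"
  obtains N where "negligible N" "\<And>x. x > 0 \<Longrightarrow> x \<notin> N \<Longrightarrow> (F has_real_derivative f x) (at x)"
proof -
  obtain N1 where N1: "negligible N1"
    "\<And>x e. \<lbrakk>x \<notin> N1; 0 < e\<rbrakk> \<Longrightarrow> \<exists>d>0. \<forall>h. 0 < h \<and> h < d \<longrightarrow> \<bar>integral {x..x+h} f / h - f x\<bar> < e"
    by (rule right_deriv_explicit[OF f]) (rule that)
  have g: "(\<lambda>t. f (-t)) integrable_on {a..b}" for a b
    using Henstock_Kurzweil_Integration.integrable_reflect_real[where f=f and a="-b" and b="-a"] f[of "-b" "-a"] by simp
  obtain N2 where N2: "negligible N2"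
    "\<And>x e. \<lbrakk>x \<notin> N2; 0 < e\<rbrakk> \<Longrightarrow> \<exists>d>0. \<forall>h. 0 < h \<and> h < d \<longrightarrow> \<bar>integral {x..x+h} (\<lambda>t. f (-t)) / h - f (- x)\<bar> < e"
    by (rule right_deriv_explicit[OF g]) (rule that)
  show ?thesis
  proof (rule that[of "N1 \<union> uminus ` N2"])
    show "negligible (N1 \<union> uminus ` N2)" using N1(1) negligible_uminus[OF N2(1)] by (rule negligible_Un)
    fix x :: real assume x: "x > 0" "x \<notin> N1 \<union> uminus ` N2"
    then have x1: "x \<notin> N1" by simp
    have x2: "-x \<notin> N2"
    proof
      assume "-x \<in> N2"
      then have "- (-x) \<in> uminus ` N2" by (rule imageI)
      then show False using x by simp
    qed
    show "(F has_real_derivative f x) (at x)"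
      unfolding has_field_derivative_iff
    proof (subst filterlim_at_split, intro conjI)
      show "((\<lambda>y. (F y - F x) / (y - x)) \<longlongrightarrow> f x) (at_right x)"
      proof (rule tendstoI)
        fix e :: real assume e: "e > 0"
        from N1(2)[OF x1 e] obtain d where d: "d > 0" "\<And>h. 0 < h \<and> h < d \<Longrightarrow> \<bar>integral {x..x+h} f / h - f x\<bar> < e"
          by (elim exE conjE) (rule that, assumption, blast)
        have "eventually (\<lambda>y. y \<in> {x<..<x+d}) (at_right x)"
          using d by (intro eventually_at_right_real) simp
        then show "\<forall>\<^sub>F y in at_right x. dist ((F y - F x) / (y - x)) (f x) < e"
        proof eventually_elim
          case (elim y)
          have "F y - F x = integral {x..y} f" using x elim by (intro F) auto
          moreover have "\<bar>integral {x..x+(y-x)} f / (y-x) - f x\<bar> < e" using elim by (intro d(2)) auto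
          ultimately show ?case by (simp add: dist_real_def)
        qed
      qed
      show "((\<lambda>y. (F y - F x) / (y - x)) \<longlongrightarrow> f x) (at_left x)"
      proof (rule tendstoI)
        fix e :: real assume e: "e > 0"
        from N2(2)[OF x2 e] obtain d where d: "d > 0" "\<And>h. 0 < h \<and> h < d \<Longrightarrow> \<bar>integral {-x..-x+h} (\<lambda>t. f (-t)) / h - f (- (-x))\<bar> < e"
          by (elim exE conjE) (rule that, assumption, blast)
        have "eventually (\<lambda>y. y \<in> {max (x-d) 0<..<x}) (at_left x)"
          using d x by (intro eventually_at_left_real) simp
        then show "\<forall>\<^sub>F y in at_left x. dist ((F y - F x) / (y - x)) (f x) < e"
        proof eventually_elim
          case (elim y)
          have "F x - F y = integral {y..x} f" using x elim by (intro F) auto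
          moreover have "integral {-x..-x+(x-y)} (\<lambda>t. f (-t)) = integral {y..x} f"
            using integral_reflect_real[of x y f] by simp
          moreover have "\<bar>integral {-x..-x+(x-y)} (\<lambda>t. f (-t)) / (x-y) - f (- (-x))\<bar> < e" using elim by (intro d(2)) auto
          moreover have "(F y - F x) / (y - x) = (F x - F y) / (x - y)" by (metis minus_diff_eq minus_divide_divide)
          ultimately show ?case by (simp add: dist_real_def)
        qed
      qed
    qed
  qed
qed


lemma R_real: "p > 0 \<Longrightarrow> a \<ge> 0 \<Longrightarrow> R (complex_of_real p) a = complex_of_real (sqrt (2 * pi) * gaussQ (sqrt (p * a)) / sqrt p)"
proof -
  assume p: "p > 0" and a: "a \<ge> 0"
  define Rr where "Rr = (\<integral>u. (if sqrt a \<le> u then exp (- p * u\<^sup>2 / 2) else 0) \<partial>lborel)"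
  have "R (complex_of_real p) a = (\<integral>u. complex_of_real (if sqrt a \<le> u then exp (- p * u\<^sup>2 / 2) else 0) \<partial>lborel)"
    unfolding R_def kR_def kf_def
    by (intro Bochner_Integration.integral_cong) (auto simp: exp_of_real[symmetric] power2_eq_square)
  also have "\<dots> = complex_of_real Rr" unfolding Rr_def by (rule integral_complex_of_real)
  finally have R1: "R (complex_of_real p) a = complex_of_real Rr" .
  have "(\<integral>t. indicator {sqrt (p * a)..} t *\<^sub>R exp (- (t\<^sup>2) / 2) \<partial>lborel)
      = \<bar>sqrt p\<bar> *\<^sub>R (\<integral>u. indicator {sqrt (p * a)..} (0 + sqrt p * u) *\<^sub>R exp (- ((0 + sqrt p * u)\<^sup>2) / 2) \<partial>lborel)"
    using p by (intro lborel_integral_real_affine) simp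
  also have "(\<integral>u. indicator {sqrt (p * a)..} (0 + sqrt p * u) *\<^sub>R exp (- ((0 + sqrt p * u)\<^sup>2) / 2) \<partial>lborel) = Rr"
    unfolding Rr_def
  proof (intro Bochner_Integration.integral_cong refl)
    fix u
    have "sqrt (p * a) \<le> sqrt p * u \<longleftrightarrow> sqrt a \<le> u"
      using p by (simp add: real_sqrt_mult)
    moreover have "(sqrt p * u)\<^sup>2 = p * u\<^sup>2" using p by (simp add: power_mult_distrib)
    ultimately show "indicator {sqrt (p * a)..} (0 + sqrt p * u) *\<^sub>R exp (- ((0 + sqrt p * u)\<^sup>2) / 2) = (if sqrt a \<le> u then exp (- p * u\<^sup>2 / 2) else 0)"
      by (simp add: indicator_def)
  qed
  finally have "gaussQ (sqrt (p * a)) = 1 / sqrt (2 * pi) * (sqrt p * Rr)"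
    using p unfolding gaussQ_def set_lebesgue_integral_def by simp
  then have "Rr = sqrt (2 * pi) * gaussQ (sqrt (p * a)) / sqrt p"
    using p by (simp add: field_simps)
  then show ?thesis using R1 by simp
qed

context setting begin

definition Psi :: "complex \<Rightarrow> complex" where "Psi p = (\<integral>\<omega>. R p (X \<omega>) \<partial>M)"

lemma Rc_meas[measurable]: "(\<lambda>\<omega>. R p (X \<omega>)) \<in> borel_measurable M"
proof -
  have "(\<lambda>\<omega>. (p, X \<omega>)) \<in> measurable M (borel \<Otimes>\<^sub>M borel)" by measurable
  from measurable_compose[OF this R_joint_meas] show ?thesis by simp
qed

lemma R'c_meas[measurable]: "(\<lambda>\<omega>. R' p (X \<omega>)) \<in> borel_measurable M"
proof -
  have "(\<lambda>\<omega>. (p, X \<omega>)) \<in> measurable M (borel \<Otimes>\<^sub>M borel)" by measurable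
  from measurable_compose[OF this R'_joint_meas] show ?thesis by simp
qed

lemma int_Rc: "Re p > 0 \<Longrightarrow> integrable M (\<lambda>\<omega>. R p (X \<omega>))"
  using R_bound[of "Re p" p] by (intro integrable_const_bound[where B="\<integral>u. exp (- (Re p / 2) * u\<^sup>2) \<partial>lborel"]) auto

lemma Psi_real: "p > 0 \<Longrightarrow> Psi (complex_of_real p) = complex_of_real (sqrt (2 * pi) / sqrt p * gaussQ_transform M X p)"
proof -
  assume p: "p > 0"
  have "Psi (complex_of_real p) = (\<integral>\<omega>. complex_of_real (sqrt (2 * pi) / sqrt p * gaussQ (sqrt (p * X \<omega>))) \<partial>M)"
    unfolding Psi_def using nn p by (intro Bochner_Integration.integral_cong refl) (simp add: R_real)
  also have "\<dots> = complex_of_real (\<integral>\<omega>. sqrt (2 * pi) / sqrt p * gaussQ (sqrt (p * X \<omega>)) \<partial>M)"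
    by (rule integral_complex_of_real)
  also have "(\<integral>\<omega>. sqrt (2 * pi) / sqrt p * gaussQ (sqrt (p * X \<omega>)) \<partial>M) = sqrt (2 * pi) / sqrt p * gaussQ_transform M X p"
    unfolding gaussQ_transform_def by (rule integral_mult_right_zero)
  finally show ?thesis .
qed

lemma Psi_deriv: "Re p > 0 \<Longrightarrow> (Psi has_field_derivative (\<integral>\<omega>. R' p (X \<omega>) \<partial>M)) (at p)"
proof -
  assume p: "Re p > 0"
  define \<delta> where "\<delta> = Re p / 2"
  have \<delta>: "\<delta> > 0" using p by (simp add: \<delta>_def)
  have cb2: "Re q \<ge> \<delta>" if "q \<in> cball p \<delta>" for q
  proof -
    have "cmod (p - q) \<le> \<delta>" using that by (simp add: dist_norm)
    moreover have "\<bar>Re (p - q)\<bar> \<le> cmod (p - q)" by (rule abs_Re_le_cmod)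
    ultimately show ?thesis by (simp add: \<delta>_def)
  qed
  have cb: "cball p \<delta> \<subseteq> {q. Re q > 0}" using cb2 \<delta> by force
  show ?thesis
    unfolding Psi_def
  proof (rule deriv_integral[where S="{q. Re q > 0}" and r=\<delta> and W="\<lambda>_. \<integral>u. u\<^sup>2 / 2 * exp (- (\<delta> / 2) * u\<^sup>2) \<partial>lborel"])
    show "open {q. Re q > 0}" by (simp add: open_halfspace_Re_gt)
    show "\<And>q y. q \<in> cball p \<delta> \<Longrightarrow> y \<in> space M \<Longrightarrow> cmod (R' q (X y)) \<le> (\<integral>u. u\<^sup>2 / 2 * exp (- (\<delta> / 2) * u\<^sup>2) \<partial>lborel)"
      using cb2 \<delta> by (intro R'_bound) auto
    show "\<And>q y. q \<in> {q. Re q > 0} \<Longrightarrow> y \<in> space M \<Longrightarrow> ((\<lambda>q. R q (X y)) has_field_derivative R' q (X y)) (at q)"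
      using R_deriv by auto
  qed (use p \<delta> cb int_Rc in auto)
qed

lemma Psi_holo: "Psi holomorphic_on {p. Re p > 0}"
  unfolding holomorphic_on_def field_differentiable_def
  using Psi_deriv by (blast intro: has_field_derivative_at_within)

definition c0 :: real where "c0 = 1 / sqrt (2 * pi)"

lemma Phi_eq:
  assumes holo: "\<Phi> holomorphic_on {p. Re p > 0}"
    and agree: "\<forall>p>0. \<Phi> (complex_of_real p) = complex_of_real (gaussQ_transform M X p)"
    and p: "Re p > 0"
  shows "\<Phi> p = complex_of_real c0 * csqrt p * Psi p"
proof -
  define S where "S = {p. Re p > 0}"
  have sub: "S \<subseteq> - \<real>\<^sub>\<le>\<^sub>0"
    unfolding S_def by (auto simp: complex_nonpos_Reals_iff)
  have zero: "\<Phi> z - complex_of_real c0 * csqrt z * Psi z = 0" if "z \<in> complex_of_real ` {0<..}" for z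
  proof -
    from that
    obtain r where r: "r > 0" "z = complex_of_real r" by auto
    have "complex_of_real c0 * csqrt z * Psi z = complex_of_real (c0 * sqrt r * (sqrt (2 * pi) / sqrt r * gaussQ_transform M X r))"
      using r by (simp add: Psi_real csqrt_of_real)
    also have "c0 * sqrt r * (sqrt (2 * pi) / sqrt r * gaussQ_transform M X r) = gaussQ_transform M X r"
      using r by (simp add: c0_def field_simps)
    finally show ?thesis using agree r by simp
  qed
  have "(\<lambda>p. \<Phi> p - complex_of_real c0 * csqrt p * Psi p) p = 0"
  proof (rule analytic_continuation[where S=S and U="complex_of_real ` {0<..}" and \<xi>=1 and f="\<lambda>p. \<Phi> p - complex_of_real c0 * csqrt p * Psi p"])
    show "(\<lambda>p. \<Phi> p - complex_of_real c0 * csqrt p * Psi p) holomorphic_on S"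
      unfolding S_def
      by (intro holomorphic_intros holo Psi_holo holomorphic_on_subset[OF holomorphic_on_csqrt sub[unfolded S_def]])
    show "open S" by (simp add: S_def open_halfspace_Re_gt)
    show "connected S" unfolding S_def by (intro convex_connected convex_halfspace_Re_gt)
    show "complex_of_real ` {0<..} \<subseteq> S" by (auto simp: S_def)
    show "1 \<in> S" by (simp add: S_def)
    show "p \<in> S" using p by (simp add: S_def)
    show "1 islimpt complex_of_real ` {0<..}"
      unfolding islimpt_approachable
    proof (intro allI impI)
      fix e :: real assume e: "e > 0"
      show "\<exists>x'\<in>complex_of_real ` {0<..}. x' \<noteq> 1 \<and> dist x' 1 < e"
      proof (intro bexI conjI)
        show "complex_of_real (1 + e / 2) \<in> complex_of_real ` {0<..}" by (rule imageI) (use e in simp)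
        show "complex_of_real (1 + e / 2) \<noteq> 1" using e by (simp add: complex_eq_iff)
        show "dist (complex_of_real (1 + e / 2)) 1 < e" using e by (simp add: dist_norm)
      qed
    qed
  qed (rule zero)
  then show ?thesis by simp
qed

definition P :: "real \<Rightarrow> real" where "P y = (\<integral>\<omega>. indicator {..<y} (X \<omega>) \<partial>M)"

lemma int_f: "integrable lborel f"
  using distributed_integrable[OF D, of "\<lambda>_. 1"] fnn by simp

lemma P_eq: "P y = (\<integral>t. f t * indicator {..<y} t \<partial>lborel)"
  unfolding P_def using fnn by (intro distributed_integral[OF D, symmetric]) auto

lemma P_diff: "z \<le> y \<Longrightarrow> P y - P z = integral {z..y} f"
proof -
  assume zy: "z \<le> y"
  have i: "integrable lborel (\<lambda>t. f t * indicator A t)" if "A \<in> sets borel" for A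
    using integrable_real_mult_indicator[OF _ int_f] that by simp
  have "P y - P z = (\<integral>t. f t * indicator {..<y} t - f t * indicator {..<z} t \<partial>lborel)"
    unfolding P_eq by (intro Bochner_Integration.integral_diff[symmetric] i) auto
  also have "\<dots> = (\<integral>t. indicator {z..y} t *\<^sub>R f t \<partial>lborel)"
  proof (rule integral_cong_AE)
    show "AE t in lborel. f t * indicator {..<y} t - f t * indicator {..<z} t = indicator {z..y} t *\<^sub>R f t"
      using AE_lborel_singleton[of y] by eventually_elim (use zy in \<open>auto simp: indicator_def\<close>)
  qed (use i in auto)
  also have "\<dots> = integral {z..y} f"
  proof -
    have "set_integrable lborel {z..y} f"
      unfolding set_integrable_def using i[of "{z..y}"] by (simp add: mult.commute)
    from set_borel_integral_eq_integral(2)[OF this] show ?thesis by (simp add: set_lebesgue_integral_def)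
  qed
  finally show ?thesis .
qed

lemma f_int_on: "f integrable_on {a..b}"
proof -
  have "set_integrable lborel {a..b} f"
    unfolding set_integrable_def using integrable_real_mult_indicator[OF _ int_f, of "{a..b}"] by (simp add: mult.commute)
  then show ?thesis by (rule set_borel_integral_eq_integral(1))
qed

lemma AE_P_deriv: "AE x in lborel. x > 0 \<longrightarrow> (P has_real_derivative f x) (at x)"
proof -
  obtain N where N: "negligible N" "\<And>x. x > 0 \<Longrightarrow> x \<notin> N \<Longrightarrow> (P has_real_derivative f x) (at x)"
    using ae_deriv[OF f_int_on, of P] P_diff by blast
  have "AE x in lebesgue. x \<notin> N"
    using N(1) by (intro AE_not_in) (simp add: negligible_iff_null_sets)
  then have "AE x in lborel. x \<notin> N" by (simp add: AE_completion_iff)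
  then show ?thesis by eventually_elim (use N(2) in auto)
qed

end

locale setk = setting M X f + kern x \<epsilon> for M :: "'a measure" and X f x \<epsilon>
begin

lemma sfM: "pair_sigma_finite lborel M"
  by (intro pair_sigma_finite.intro lborel.sigma_finite_measure_axioms) unfold_locales

lemma Complex_meas[measurable]: "(\<lambda>t. Complex \<epsilon> t) \<in> borel_measurable borel"
  unfolding Complex_alt by measurable

lemma Rpair_meas: "(\<lambda>z. R (Complex \<epsilon> (fst z)) (X (snd z))) \<in> borel_measurable (lborel \<Otimes>\<^sub>M M)"
proof -
  have "(\<lambda>z. (Complex \<epsilon> (fst z), X (snd z))) \<in> measurable (lborel \<Otimes>\<^sub>M M) (borel \<Otimes>\<^sub>M borel)" by measurable
  from measurable_compose[OF this R_joint_meas] show ?thesis by simp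
qed

lemma trunc:
  assumes holo: "\<Phi> holomorphic_on {p. Re p > 0}"
    and agree: "\<forall>p>0. \<Phi> (complex_of_real p) = complex_of_real (gaussQ_transform M X p)"
    and T: "T \<ge> 0"
  shows "integral {-T..T} (bromwich_integrand \<Phi> \<epsilon> x) = \<i> * complex_of_real c0 * complex_of_real (\<integral>\<omega>. J T (X \<omega>) \<partial>M)"
proof -
  interpret LM: pair_sigma_finite lborel M by (rule sfM)
  define h where "h t = \<i> * complex_of_real c0 * (Psi (Complex \<epsilon> t) * et t)" for t
  have bi: "bromwich_integrand \<Phi> \<epsilon> x t = h t" for t
  proof -
    have Re: "Re (Complex \<epsilon> t) > 0" using e by simp
    have "Complex \<epsilon> t \<noteq> 0" using e by (simp add: complex_eq_iff)
    then have nz: "csqrt (Complex \<epsilon> t) \<noteq> 0" by simp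
    show ?thesis
      unfolding bromwich_integrand_def h_def et_def Let_def Phi_eq[OF holo agree Re]
      using nz by (simp add: field_simps)
  qed
  have contPsi: "continuous_on UNIV (\<lambda>t. Psi (Complex \<epsilon> t))"
  proof (rule continuous_on_compose2[OF holomorphic_on_imp_continuous_on[OF Psi_holo]])
    show "continuous_on UNIV (\<lambda>t. Complex \<epsilon> t)" unfolding Complex_alt by (intro continuous_intros)
  qed (use e in auto)
  have conth: "continuous_on {-T..T} h"
    unfolding h_def et_def Complex_alt
    by (intro continuous_intros continuous_on_subset[OF contPsi[unfolded Complex_alt]]) auto
  have "bromwich_integrand \<Phi> \<epsilon> x = h" by (rule ext) (rule bi)
  then have "integral {-T..T} (bromwich_integrand \<Phi> \<epsilon> x) = integral {-T..T} h" by simp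
  also have "\<dots> = (\<integral>t. indicator {-T..T} t *\<^sub>R h t \<partial>lborel)"
    using set_borel_integral_eq_integral(2)[OF borel_integrable_atLeastAtMost'[OF conth]]
    by (simp add: set_lebesgue_integral_def)
  also have "\<dots> = \<i> * complex_of_real c0 * (\<integral>t. indicator {-T..T} t *\<^sub>R (Psi (Complex \<epsilon> t) * et t) \<partial>lborel)"
    unfolding h_def by (simp add: integral_mult_right_zero[symmetric] del: integral_mult_right_zero)
  also have "(\<integral>t. indicator {-T..T} t *\<^sub>R (Psi (Complex \<epsilon> t) * et t) \<partial>lborel)
      = (\<integral>t. \<integral>\<omega>. indicator {-T..T} t *\<^sub>R (R (Complex \<epsilon> t) (X \<omega>) * et t) \<partial>M \<partial>lborel)"
  proof (rule Bochner_Integration.integral_cong[OF refl])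
    fix t
    have "Psi (Complex \<epsilon> t) * et t = (\<integral>\<omega>. R (Complex \<epsilon> t) (X \<omega>) * et t \<partial>M)"
      unfolding Psi_def by (rule integral_mult_left_zero[symmetric])
    then show "indicator {-T..T} t *\<^sub>R (Psi (Complex \<epsilon> t) * et t) = (\<integral>\<omega>. indicator {-T..T} t *\<^sub>R (R (Complex \<epsilon> t) (X \<omega>) * et t) \<partial>M)"
      by (simp only: integral_scaleR_right)
  qed
  also have "\<dots> = (\<integral>\<omega>. \<integral>t. indicator {-T..T} t *\<^sub>R (R (Complex \<epsilon> t) (X \<omega>) * et t) \<partial>lborel \<partial>M)"
  proof (rule LM.Fubini_integral[symmetric])
    define K where "K = (\<integral>u. exp (- (\<epsilon> / 2) * u\<^sup>2) \<partial>lborel)"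
    have bnd: "integrable (lborel \<Otimes>\<^sub>M M) (\<lambda>z. indicator {-T..T} (fst z) * (K * E0))"
    proof (rule LM.Fubini_integrable)
      show "(\<lambda>z. indicator {-T..T} (fst z) * (K * E0)) \<in> borel_measurable (lborel \<Otimes>\<^sub>M M)" by measurable
      have "integrable lborel (\<lambda>t. indicator {-T..T} t * \<bar>K * E0\<bar>)"
        by (simp add: emeasure_lborel_Icc_eq)
      then show "integrable lborel (\<lambda>t. \<integral>\<omega>. norm (indicator {-T..T} (fst (t, \<omega>)) * (K * E0)) \<partial>M)"
        by (simp add: prob_space abs_mult)
      show "AE t in lborel. integrable M (\<lambda>\<omega>. indicator {-T..T} (fst (t, \<omega>)) * (K * E0))" by simp
    qed
    show "integrable (lborel \<Otimes>\<^sub>M M) (\<lambda>(t, \<omega>). indicator {-T..T} t *\<^sub>R (R (Complex \<epsilon> t) (X \<omega>) * et t))"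
    proof (rule Bochner_Integration.integrable_bound[OF bnd])
      show "(\<lambda>(t, \<omega>). indicator {-T..T} t *\<^sub>R (R (Complex \<epsilon> t) (X \<omega>) * et t)) \<in> borel_measurable (lborel \<Otimes>\<^sub>M M)"
        using Rpair_meas by (simp add: split_beta') measurable
      show "AE z in lborel \<Otimes>\<^sub>M M. norm (case z of (t, \<omega>) \<Rightarrow> indicator {-T..T} t *\<^sub>R (R (Complex \<epsilon> t) (X \<omega>) * et t)) \<le> norm (indicator {-T..T} (fst z) * (K * E0))"
      proof (intro AE_I2)
        fix z :: "real \<times> 'a"
        obtain t \<omega> where z: "z = (t, \<omega>)" by fastforce
        have "norm (R (Complex \<epsilon> t) (X \<omega>)) \<le> K" unfolding K_def using e by (intro R_bound) auto
        then have "norm (R (Complex \<epsilon> t) (X \<omega>) * et t) \<le> K * E0"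
          by (simp add: norm_mult norm_et E0_def)
        moreover have "K \<ge> 0" unfolding K_def by (intro integral_nonneg_AE) auto
        ultimately show "norm (case z of (t, \<omega>) \<Rightarrow> indicator {-T..T} t *\<^sub>R (R (Complex \<epsilon> t) (X \<omega>) * et t)) \<le> norm (indicator {-T..T} (fst z) * (K * E0))"
          by (auto simp: z indicator_def abs_mult E0_def)
      qed
    qed
  qed
  also have "\<dots> = (\<integral>\<omega>. complex_of_real (J T (X \<omega>)) \<partial>M)"
    using inner[OF T] by simp
  also have "\<dots> = complex_of_real (\<integral>\<omega>. J T (X \<omega>) \<partial>M)" by (rule integral_complex_of_real)
  finally show ?thesis .
qed

lemma J_meas[measurable]: "(\<lambda>\<omega>. J T (X \<omega>)) \<in> borel_measurable M"
proof -
  have "(\<lambda>z::real \<times> real. indicator {sqrt (fst z)..} (snd z) * jT T (snd z)) \<in> borel_measurable (borel \<Otimes>\<^sub>M lborel)"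
    unfolding jT_def psi_def w_def indicator_def atLeast_iff by measurable
  then have "(\<lambda>a::real. \<integral>u. indicator {sqrt a..} u * jT T u \<partial>lborel) \<in> borel_measurable borel"
    by (intro lborel.borel_measurable_lebesgue_integral) (simp add: split_beta')
  then have "(\<lambda>a. J T a) \<in> borel_measurable borel" by (simp add: J_def)
  then show ?thesis by measurable
qed

lemma lim_int: "((\<lambda>T. \<integral>\<omega>. J T (X \<omega>) \<partial>M) \<longlongrightarrow> 2 * pi / sqrt x * P x) at_top"
proof -
  have "((\<lambda>T. \<integral>\<omega>. J T (X \<omega>) \<partial>M) \<longlongrightarrow> (\<integral>\<omega>. 2 * pi / sqrt x * indicator {..<x} (X \<omega>) \<partial>M)) at_top"
  proof (rule integral_dominated_convergence_at_top[where w="\<lambda>_. Cb"])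
    show "AE \<omega> in M. ((\<lambda>T. J T (X \<omega>)) \<longlongrightarrow> 2 * pi / sqrt x * indicator {..<x} (X \<omega>)) at_top"
      using AE_pos AE_neq[of x]
    proof eventually_elim
      case (elim \<omega>)
      show ?case using J_lim[of "X \<omega>"] elim by (cases "X \<omega> < x") (simp_all add: indicator_def)
    qed
    show "\<forall>\<^sub>F T in at_top. AE \<omega> in M. norm (J T (X \<omega>)) \<le> Cb"
      using eventually_ge_at_top[of 0]
    proof eventually_elim
      case (elim T)
      show ?case using nn J_bound elim by (intro AE_I2) auto
    qed
  qed auto
  then show ?thesis by (simp add: P_def)
qed

lemma brom_lim:
  assumes holo: "\<Phi> holomorphic_on {p. Re p > 0}"
    and agree: "\<forall>p>0. \<Phi> (complex_of_real p) = complex_of_real (gaussQ_transform M X p)"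
  shows "((\<lambda>T. integral {-T..T} (bromwich_integrand \<Phi> \<epsilon> x)) \<longlongrightarrow> \<i> * complex_of_real c0 * complex_of_real (2 * pi / sqrt x * P x)) at_top"
    and "bromwich \<Phi> \<epsilon> x = \<i> * complex_of_real c0 * complex_of_real (2 * pi / sqrt x * P x)"
proof -
  have "((\<lambda>T. \<i> * complex_of_real c0 * complex_of_real (\<integral>\<omega>. J T (X \<omega>) \<partial>M)) \<longlongrightarrow> \<i> * complex_of_real c0 * complex_of_real (2 * pi / sqrt x * P x)) at_top"
    by (intro tendsto_intros lim_int)
  then show l: "((\<lambda>T. integral {-T..T} (bromwich_integrand \<Phi> \<epsilon> x)) \<longlongrightarrow> \<i> * complex_of_real c0 * complex_of_real (2 * pi / sqrt x * P x)) at_top"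
  proof (rule Lim_transform_eventually)
    show "\<forall>\<^sub>F T in at_top. \<i> * complex_of_real c0 * complex_of_real (\<integral>\<omega>. J T (X \<omega>) \<partial>M) = integral {-T..T} (bromwich_integrand \<Phi> \<epsilon> x)"
      using eventually_ge_at_top[of 0] by eventually_elim (simp add: trunc[OF holo agree])
  qed
  show "bromwich \<Phi> \<epsilon> x = \<i> * complex_of_real c0 * complex_of_real (2 * pi / sqrt x * P x)"
    unfolding bromwich_def by (rule tendsto_Lim[OF _ l]) simp
qed

lemma brom_P:
  assumes holo: "\<Phi> holomorphic_on {p. Re p > 0}"
    and agree: "\<forall>p>0. \<Phi> (complex_of_real p) = complex_of_real (gaussQ_transform M X p)"
  shows "1 / (\<i> * complex_of_real (sqrt (2 * pi))) * complex_of_real (sqrt x) * bromwich \<Phi> \<epsilon> x = complex_of_real (P x)"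
proof -
  have gen: "1 / (\<i> * complex_of_real r) * complex_of_real s * (\<i> * complex_of_real c * complex_of_real (b * Q)) = complex_of_real Q"
    if "r > 0" "c * b * s = r" for r s c b Q :: real
  proof -
    have "1 / (\<i> * complex_of_real r) * complex_of_real s * (\<i> * complex_of_real c * complex_of_real (b * Q)) = complex_of_real ((c * b * s) / r * Q)"
      using that(1) by (simp add: field_simps)
    then show ?thesis using that by simp
  qed
  have s: "sqrt x > 0" using x by simp
  have sq: "sqrt (2 * pi) * sqrt (2 * pi) = 2 * pi" by simp
  have "c0 * (2 * pi / sqrt x) * sqrt x = sqrt (2 * pi)"
    using s unfolding c0_def by (simp add: field_simps)
  then show ?thesis
    unfolding brom_lim(2)[OF holo agree] by (intro gen) auto
qed

end


theorem lemma1: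
  fixes M :: "'a measure" and X :: "'a \<Rightarrow> real" and f :: "real \<Rightarrow> real"
  assumes "prob_space M"
    and "\<forall>\<omega>\<in>space M. X \<omega> \<ge> 0"
    and "f \<in> borel_measurable borel"
    and "\<forall>x. f x \<ge> 0"
    and "distributed M lborel X (\<lambda>x. ennreal (f x))"
  shows "(\<forall>p\<ge>0. integrable M (\<lambda>\<omega>. gaussQ (sqrt (p * X \<omega>))))
    \<and> continuous_on {0..} (gaussQ_transform M X)
    \<and> (\<forall>p q. 0 \<le> p \<and> p < q \<longrightarrow> gaussQ_transform M X q < gaussQ_transform M X p)
    \<and> gaussQ_transform M X 0 = 1 / 2
    \<and> (gaussQ_transform M X \<longlongrightarrow> 0) at_top
    \<and> (\<forall>\<Phi>. \<Phi> holomorphic_on {p. Re p > 0}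
           \<and> (\<forall>p>0. \<Phi> (complex_of_real p) = complex_of_real (gaussQ_transform M X p))
         \<longrightarrow> (\<forall>\<epsilon>>0.
               (\<forall>x>0. ((\<lambda>T. integral {-T..T} (bromwich_integrand \<Phi> \<epsilon> x))
                          \<longlongrightarrow> bromwich \<Phi> \<epsilon> x) at_top)
             \<and> (AE x in lborel. x > 0 \<longrightarrow>
                  ((\<lambda>y. 1 / (\<i> * complex_of_real (sqrt (2 * pi)))
                          * complex_of_real (sqrt y) * bromwich \<Phi> \<epsilon> y)
                     has_vector_derivative complex_of_real (f x)) (at x))))"
proof -
  have st: "setting M X f"
    unfolding setting_def setting_axioms_def using assms by auto
  interpret setting M X f by (rule st)
  have sk: "setk M X f x \<epsilon>" if "x > 0" "\<epsilon> > 0" for x \<epsilon>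
    unfolding setk_def kern_def using st that by auto
  have part2: "(\<forall>\<epsilon>>0.
               (\<forall>x>0. ((\<lambda>T. integral {-T..T} (bromwich_integrand \<Phi> \<epsilon> x))
                          \<longlongrightarrow> bromwich \<Phi> \<epsilon> x) at_top)
             \<and> (AE x in lborel. x > 0 \<longrightarrow>
                  ((\<lambda>y. 1 / (\<i> * complex_of_real (sqrt (2 * pi)))
                          * complex_of_real (sqrt y) * bromwich \<Phi> \<epsilon> y)
                     has_vector_derivative complex_of_real (f x)) (at x)))"
    if holo: "\<Phi> holomorphic_on {p. Re p > 0}"
      and agree: "\<forall>p>0. \<Phi> (complex_of_real p) = complex_of_real (gaussQ_transform M X p)" for \<Phi>
  proof (intro allI impI)
    fix \<epsilon> :: real assume e: "\<epsilon> > 0"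
    have A: "\<forall>x>0. ((\<lambda>T. integral {-T..T} (bromwich_integrand \<Phi> \<epsilon> x)) \<longlongrightarrow> bromwich \<Phi> \<epsilon> x) at_top"
    proof (intro allI impI)
      fix x :: real assume x: "x > 0"
      show "((\<lambda>T. integral {-T..T} (bromwich_integrand \<Phi> \<epsilon> x)) \<longlongrightarrow> bromwich \<Phi> \<epsilon> x) at_top"
        using setk.brom_lim(1)[OF sk[OF x e] holo agree] setk.brom_lim(2)[OF sk[OF x e] holo agree] by simp
    qed
    have B: "AE x in lborel. x > 0 \<longrightarrow>
                  ((\<lambda>y. 1 / (\<i> * complex_of_real (sqrt (2 * pi)))
                          * complex_of_real (sqrt y) * bromwich \<Phi> \<epsilon> y)
                     has_vector_derivative complex_of_real (f x)) (at x)"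
      using AE_P_deriv
    proof eventually_elim
      case (elim x)
      show ?case
      proof
        assume x: "x > 0"
        then have dP: "(P has_real_derivative f x) (at x)" using elim by simp
        have "((\<lambda>y. complex_of_real (P y)) has_vector_derivative complex_of_real (f x)) (at x)"
          using dP by (auto intro!: derivative_eq_intros simp: has_real_derivative_iff_has_vector_derivative[symmetric])
        then show "((\<lambda>y. 1 / (\<i> * complex_of_real (sqrt (2 * pi))) * complex_of_real (sqrt y) * bromwich \<Phi> \<epsilon> y)
                     has_vector_derivative complex_of_real (f x)) (at x)"
        proof (rule has_vector_derivative_transform_within_open[where S="{0<..}"])
          show "open {0::real<..}" by simp
          show "x \<in> {0<..}" using x by simp
          fix y :: real assume "y \<in> {0<..}"
          then have y: "y > 0" by simp
          show "complex_of_real (P y) = 1 / (\<i> * complex_of_real (sqrt (2 * pi))) * complex_of_real (sqrt y) * bromwich \<Phi> \<epsilon> y"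
            using setk.brom_P[OF sk[OF y e] holo agree] by simp
        qed
      qed
    qed
    show "(\<forall>x>0. ((\<lambda>T. integral {-T..T} (bromwich_integrand \<Phi> \<epsilon> x)) \<longlongrightarrow> bromwich \<Phi> \<epsilon> x) at_top) \<and>
          (AE x in lborel. x > 0 \<longrightarrow>
                  ((\<lambda>y. 1 / (\<i> * complex_of_real (sqrt (2 * pi)))
                          * complex_of_real (sqrt y) * bromwich \<Phi> \<epsilon> y)
                     has_vector_derivative complex_of_real (f x)) (at x))"
      using A B by blast
  qed
  show ?thesis
    using int_Q Qt_cont Qt_strict Qt_zero Qt_top part2 by blast
qed


end
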